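(* Let $\bar\delta,\underline\delta\ge1$ be integers, $\pi$ the switching policy $(\bar\delta,\underline\delta)$, and $N>\max\{\bar\delta,\underline\delta\}$. Let $\nu_{i,j,\delta}$ be the stationary distribution of $\{S_t\}$ under $\pi$ in the original (untruncated) system, and $\nu_{i,j,\delta}(N)$ that of the truncated chain under $\pi$. Then $\nu_{i,j,\delta}(N)=\nu_{i,j,\delta}$ for all $(i,j,\delta)\in\mathcal S_N\setminus\{(1,0,N),(0,1,N)\}$, and $$\nu_{1,0,N}(N)=\frac{\bar qp_f}{1-\bar qp_f}\nu_{1,0,N-1},\qquad \nu_{0,1,N}(N)=\frac{\bar pp_f}{1-\bar pp_f}\nu_{0,1,N-1}.$$ Moreover, $\mathcal L(\pi,N)=\mathcal L(\pi)-\sigma(\pi,N)$, where $$\sigma(\pi,N)=\frac{\beta\nu_{0,0,0}\,p\,\bar q^{N}p_f^{N-\bar\delta+1}}{(1-\bar qp_f)^2}+\frac{(1-\beta)\nu_{1,1,0}\,q\,\bar p^{N}p_f^{N-\underline\delta+1}}{(1-\bar pp_f)^2}.$$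
   Context: Fix $p,q\in(0,1)$, $\bar p=1-p$, $\bar q=1-q$. The source $\{X_t\}$ is a Markov chain on $\{0,1\}$ with $\Pr[X_{t+1}=1\mid X_t=0]=p$, $\Pr[X_{t+1}=0\mid X_t=1]=q$; channel i.i.d. Bernoulli with success probability $p_s\in(0,1]$, independent of the source, $p_f=1-p_s$. Estimate dynamics: if $A_t=1$ and the transmission succeeds then $\hat X_{t+1}=X_{t+1}$, otherwise $\hat X_{t+1}=\hat X_t$. Original system: age $\Delta_{t+1}=\Delta_t+1$ if $X_{t+1}\ne\hat X_{t+1}$, else $0$; state $S_t=(X_t,\hat X_t,\Delta_t)\in\mathcal S=\{(0,0,0),(1,1,0)\}\cup\{(1,0,\delta),(0,1,\delta):\delta\ge1\}$, $S_1=(0,0,0)$. Truncated system with level $N$: age $\Delta_{t+1}=\min(\Delta_t+1,N)$ if $X_{t+1}\ne\hat X_{t+1}$, else $0$; state space $\mathcal S_N=\{(0,0,0),(1,1,0)\}\cup\{(1,0,\delta),(0,1,\delta):1\le\delta\le N\}$. In both, per-state cost $c(s)=\beta\delta$ for $s=(1,0,\delta)$, $(1-\beta)\delta$ for $s=(0,1,\delta)$, $0$ for synced states, $\beta\in[0,1]$; per-stage cost $\ell(s,a)=\mathbb E[c(S_{t+1})\mid S_t=s,A_t=a]+\lambda\mathbb 1\{a=1\}$, $\lambda\ge0$; $\mathcal L(\pi)$ and $\mathcal L(\pi,N)$ denote the average costs $\limsup_{T\to\infty}\frac1T\sum_{t=1}^T\mathbb E^\pi[\ell(S_t,A_t)\mid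 S_1=(0,0,0)]$ in the original and truncated systems, respectively. For integers $\bar\delta,\underline\delta\ge1$, the switching policy $(\bar\delta,\underline\delta)$ transmits iff $S_t=(1,0,\delta)$ with $\delta\ge\bar\delta$ or $S_t=(0,1,\delta)$ with $\delta\ge\underline\delta$. *)

theory Defs
  imports "HOL-Probability.Probability"
begin

type_synonym state = "nat \<times> nat \<times> nat"  \<comment> \<open>(X_t, Xhat_t, Delta_t)\<close>

text \<open>Parameters: age update g (Suc for the original
system, min (Suc d) N for the truncated one), p, q, success probability ps, action a
(True = transmit), current state.\<close>
definition step_kernel ::
  "(nat \<Rightarrow> nat) \<Rightarrow> real \<Rightarrow> real \<Rightarrow> real \<Rightarrow> bool \<Rightarrow> state \<Rightarrow> state pmf" where
  "step_kernel g p q ps a s =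
     (case s of (x, xh, d) \<Rightarrow>
        bind_pmf (bernoulli_pmf (if x = 0 then p else 1 - q)) (\<lambda>x1.
        bind_pmf (bernoulli_pmf ps) (\<lambda>succ.
          (let x' = (if x1 then 1 else 0 :: nat);
               xh' = (if a \<and> succ then x' else xh)
           in return_pmf (x', xh', if x' \<noteq> xh' then g d else 0)))))"

definition orig_kernel :: "real \<Rightarrow> real \<Rightarrow> real \<Rightarrow> bool \<Rightarrow> state \<Rightarrow> state pmf" where
  "orig_kernel p q ps = step_kernel Suc p q ps"

definition trunc_kernel :: "nat \<Rightarrow> real \<Rightarrow> real \<Rightarrow> real \<Rightarrow> bool \<Rightarrow> state \<Rightarrow> state pmf" where
  "trunc_kernel N p q ps = step_kernel (\<lambda>d. min (Suc d) N) p q ps"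

definition orig_states :: "state set" where
  "orig_states = {(0,0,0), (1,1,0)} \<union> {(1,0,d) | d. d \<ge> 1} \<union> {(0,1,d) | d. d \<ge> 1}"

definition trunc_states :: "nat \<Rightarrow> state set" where
  "trunc_states N = {(0,0,0), (1,1,0)} \<union> {(1,0,d) | d. 1 \<le> d \<and> d \<le> N}
                     \<union> {(0,1,d) | d. 1 \<le> d \<and> d \<le> N}"

definition switching_policy :: "nat \<Rightarrow> nat \<Rightarrow> state \<Rightarrow> bool" where
  "switching_policy dbar dund s =
     (case s of (x, xh, d) \<Rightarrow> (x = 1 \<and> xh = 0 \<and> d \<ge> dbar) \<or> (x = 0 \<and> xh = 1 \<and> d \<ge> dund))"

definition state_cost :: "real \<Rightarrow> state \<Rightarrow> real" where
  "state_cost \<beta> s = (case s of (x, xh, d) \<Rightarrow>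
      if x = 1 \<and> xh = 0 then \<beta> * real d
      else if x = 0 \<and> xh = 1 then (1 - \<beta>) * real d else 0)"

definition stage_cost ::
  "(bool \<Rightarrow> state \<Rightarrow> state pmf) \<Rightarrow> real \<Rightarrow> real \<Rightarrow> state \<Rightarrow> bool \<Rightarrow> real" where
  "stage_cost K \<beta> lam s a =
     measure_pmf.expectation (K a s) (state_cost \<beta>) + lam * (if a then 1 else 0)"

text \<open>Distribution of S_{t+1} under a stationary deterministic policy pol, S_1 = (0,0,0).\<close>
primrec state_dist ::
  "(bool \<Rightarrow> state \<Rightarrow> state pmf) \<Rightarrow> (state \<Rightarrow> bool) \<Rightarrow> nat \<Rightarrow> state pmf" where
  "state_dist K pol 0 = return_pmf (0,0,0)"
| "state_dist K pol (Suc t) = bind_pmf (state_dist K pol t) (\<lambda>s. K (pol s) s)"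

definition avg_cost ::
  "(bool \<Rightarrow> state \<Rightarrow> state pmf) \<Rightarrow> real \<Rightarrow> real \<Rightarrow> (state \<Rightarrow> bool) \<Rightarrow> ereal" where
  "avg_cost K \<beta> lam pol = limsup (\<lambda>T. ereal ((1 / real T) *
      (\<Sum>t<T. measure_pmf.expectation (state_dist K pol t) (\<lambda>s. stage_cost K \<beta> lam s (pol s)))))"

definition stationary_dist ::
  "(bool \<Rightarrow> state \<Rightarrow> state pmf) \<Rightarrow> (state \<Rightarrow> bool) \<Rightarrow> state set \<Rightarrow> state pmf \<Rightarrow> bool" where
  "stationary_dist K pol S \<nu> \<longleftrightarrow>
     set_pmf \<nu> \<subseteq> S \<and> bind_pmf \<nu> (\<lambda>s. K (pol s) s) = \<nu>"

end

theory Submission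
  imports Defs
begin

definition fN :: "nat \<Rightarrow> state \<Rightarrow> state" where
  "fN N s = (case s of (x,xh,d) \<Rightarrow> (x,xh,min d N))"

lemma lump:
  assumes "N > max dbar dund"
  shows "trunc_kernel N p q ps (switching_policy dbar dund (fN N s)) (fN N s)
       = map_pmf (fN N) (orig_kernel p q ps (switching_policy dbar dund s) s)"
proof -
  obtain x xh d where s: "s = (x,xh,d)" by (cases s) auto
  have pol: "switching_policy dbar dund (x,xh,min d N) = switching_policy dbar dund (x,xh,d)"
    using assms by (auto simp: switching_policy_def)
  show ?thesis
    unfolding s fN_def trunc_kernel_def orig_kernel_def step_kernel_def
    apply (simp only: prod.case map_bind_pmf map_return_pmf Let_def pol)
    apply (intro bind_pmf_cong refl)
    apply (auto simp: min_def fN_def)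
    done
qed

definition res :: "(nat\<Rightarrow>nat) \<Rightarrow> bool \<Rightarrow> nat \<Rightarrow> nat \<Rightarrow> bool \<Rightarrow> bool \<Rightarrow> state" where
  "res g a xh d x1 succ = (let x' = (if x1 then 1 else 0 :: nat);
               xh' = (if a \<and> succ then x' else xh)
           in (x', xh', if x' \<noteq> xh' then g d else 0))"

lemma step_res: "step_kernel g p q ps a (x,xh,d) =
  bind_pmf (bernoulli_pmf (if x = 0 then p else 1 - q)) (\<lambda>x1.
        bind_pmf (bernoulli_pmf ps) (\<lambda>succ. return_pmf (res g a xh d x1 succ)))"
  unfolding step_kernel_def res_def Let_def prod.case by (rule refl)

lemma expK:
  fixes h :: "state \<Rightarrow> real"
  assumes "0 \<le> p" "p \<le> 1" "0 \<le> q" "q \<le> 1" "0 \<le> ps" "ps \<le> 1"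
  shows "measure_pmf.expectation (step_kernel g p q ps a (x,xh,d)) h =
    (if x = 0 then p else 1 - q) * (ps * h (res g a xh d True True) + (1-ps) * h (res g a xh d True False))
  + (1 - (if x = 0 then p else 1 - q)) * (ps * h (res g a xh d False True) + (1-ps) * h (res g a xh d False False))"
proof -
  have r: "0 \<le> (if x = 0 then p else 1 - q)" "(if x = 0 then p else 1 - q) \<le> 1" using assms by auto
  show ?thesis unfolding step_res
    apply (subst pmf_expectation_bind[where A=UNIV], simp, simp, simp)
    apply (subst pmf_expectation_bind[where A=UNIV], simp, simp, simp)+
    apply (simp add: UNIV_bool r assms algebra_simps)
    done
qed

lemma pmf_as_exp: "pmf M x = measure_pmf.expectation M (\<lambda>y. if y = x then 1 else 0 :: real)"
  by (subst integral_measure_pmf_real[where A="{x}"]) (auto split: if_splits)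

lemma set_step: "set_pmf (step_kernel g p q ps a (x,xh,d)) \<subseteq> (\<lambda>(x1,s). res g a xh d x1 s) ` UNIV"
  unfolding step_res by (auto intro: rev_image_eqI[of "(a1,b1)" for a1 b1])

lemma finite_step: "finite (set_pmf (step_kernel g p q ps a s))"
proof -
  obtain x xh d where "s = (x,xh,d)" by (cases s) auto
  then show ?thesis using set_step[of g p q ps a x xh d] by (auto intro: finite_subset)
qed

lemma res_in_trunc: "xh \<le> 1 \<Longrightarrow> 1 \<le> g d \<Longrightarrow> g d \<le> N \<Longrightarrow> res g a xh d x1 s \<in> trunc_states N"
  unfolding res_def trunc_states_def by (cases xh) (auto simp: Let_def)

lemma res_in_orig: "xh \<le> 1 \<Longrightarrow> 1 \<le> g d \<Longrightarrow> res g a xh d x1 s \<in> orig_states"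
  unfolding res_def orig_states_def by (cases xh) (auto simp: Let_def)

lemma step_in_trunc: "xh \<le> 1 \<Longrightarrow> 1 \<le> g d \<Longrightarrow> g d \<le> N \<Longrightarrow> set_pmf (step_kernel g p q ps a (x,xh,d)) \<subseteq> trunc_states N"
  using set_step[of g p q ps a x xh d] res_in_trunc[of xh g d N a] by fastforce

lemma step_in_orig: "xh \<le> 1 \<Longrightarrow> 1 \<le> g d \<Longrightarrow> set_pmf (step_kernel g p q ps a (x,xh,d)) \<subseteq> orig_states"
  using set_step[of g p q ps a x xh d] res_in_orig[of xh g d a] by fastforce

lemma finite_trunc: "finite (trunc_states N)"
proof -
  have "trunc_states N = {(0,0,0),(1,1,0)} \<union> (\<lambda>d. (1,0,d)) ` {1..N} \<union> (\<lambda>d. (0,1,d)) ` {1..N}"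
    unfolding trunc_states_def by auto
  then show ?thesis by simp
qed

lemma sum_trunc: "(\<Sum>s\<in>trunc_states N. F s) = F (0,0,0) + F (1,1,0) + (\<Sum>d=1..N. F (1,0,d)) + (\<Sum>d=1..N. F (0,1,d))"
proof -
  have e: "trunc_states N = ({(0,0,0),(1,1,0)} \<union> (\<lambda>d. (1,0,d)) ` {1..N}) \<union> (\<lambda>d. (0,1,d)) ` {1..N}"
    unfolding trunc_states_def by auto
  have i1: "inj_on (\<lambda>d. (1::nat,0::nat,d)) {1..N}" "inj_on (\<lambda>d. (0::nat,1::nat,d)) {1..N}" by (auto simp: inj_on_def)
  show ?thesis unfolding e
    apply (subst sum.union_disjoint, simp, simp, force)
    apply (subst sum.union_disjoint, simp, simp, force)
    unfolding sum.reindex[OF i1(1)] sum.reindex[OF i1(2)] comp_def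
    apply simp
    done
qed


lemma chain_lim:
  fixes y :: "nat \<Rightarrow> nat \<Rightarrow> real" and z :: "nat \<Rightarrow> real"
  assumes N2: "2 \<le> N"
    and h1: "(\<lambda>T. y T 1 - a * z T) \<longlonglongrightarrow> 0"
    and h2: "\<And>e. 1 \<le> e \<Longrightarrow> Suc e < N \<Longrightarrow> (\<lambda>T. y T (Suc e) - b e * y T e) \<longlonglongrightarrow> 0"
    and h3: "(\<lambda>T. y T N - \<rho> * (y T (N-1) + y T N)) \<longlonglongrightarrow> 0"
    and rho: "\<rho> \<noteq> 1"
    and c1: "c 1 = a" and c2: "\<And>e. 1 \<le> e \<Longrightarrow> Suc e < N \<Longrightarrow> c (Suc e) = b e * c e"
    and c3: "(1 - \<rho>) * c N = \<rho> * c (N-1)"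
  shows "\<And>d. 1 \<le> d \<Longrightarrow> d \<le> N \<Longrightarrow> (\<lambda>T. y T d - c d * z T) \<longlonglongrightarrow> 0"
proof -
  have lt: "(\<lambda>T. y T d - c d * z T) \<longlonglongrightarrow> 0" if "1 \<le> d" "d < N" for d
    using that
  proof (induction d rule: nat_induct_at_least)
    case base then show ?case using h1 c1 by simp
  next
    case (Suc e)
    have "(\<lambda>T. (y T (Suc e) - b e * y T e) + b e * (y T e - c e * z T)) \<longlonglongrightarrow> 0 + b e * 0"
      using tendsto_add[OF h2[of e] tendsto_mult[OF tendsto_const Suc.IH]] Suc by simp
    moreover have "(\<lambda>T. (y T (Suc e) - b e * y T e) + b e * (y T e - c e * z T)) = (\<lambda>T. y T (Suc e) - c (Suc e) * z T)"
      using c2[of e] Suc by (auto simp: algebra_simps)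
    ultimately show ?case by simp
  qed
  fix d assume d: "1 \<le> d" "d \<le> N"
  show "(\<lambda>T. y T d - c d * z T) \<longlonglongrightarrow> 0"
  proof (cases "d < N")
    case True then show ?thesis using lt d by simp
  next
    case False
    then have dN: "d = N" using d by simp
    have l: "(\<lambda>T. y T (N-1) - c (N-1) * z T) \<longlonglongrightarrow> 0" using lt[of "N-1"] N2 by linarith
    have "(\<lambda>T. ((y T N - \<rho> * (y T (N-1) + y T N)) + \<rho> * (y T (N-1) - c (N-1) * z T)) / (1 - \<rho>)) \<longlonglongrightarrow> (0 + \<rho> * 0) / (1 - \<rho>)"
      by (rule tendsto_divide[OF tendsto_add[OF h3 tendsto_mult[OF tendsto_const l]] tendsto_const]) (use rho in simp)
    moreover have "(\<lambda>T. ((y T N - \<rho> * (y T (N-1) + y T N)) + \<rho> * (y T (N-1) - c (N-1) * z T)) / (1 - \<rho>)) = (\<lambda>T. y T N - c N * z T)"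
    proof
      fix T
      have "(y T N - \<rho> * (y T (N-1) + y T N)) + \<rho> * (y T (N-1) - c (N-1) * z T) = (1 - \<rho>) * (y T N - c N * z T)"
      proof -
        have "\<rho> * c (N-1) * z T = (1-\<rho>) * c N * z T" using c3 by simp
        then show ?thesis by (simp add: algebra_simps)
      qed
      then show "((y T N - \<rho> * (y T (N-1) + y T N)) + \<rho> * (y T (N-1) - c (N-1) * z T)) / (1 - \<rho>) = y T N - c N * z T"
        using rho by simp
    qed
    ultimately show ?thesis using dN by simp
  qed
qed


locale sys =
  fixes p q ps :: real and dbar dund N :: nat
  assumes p0: "0 < p" and p1: "p < 1" and q0: "0 < q" and q1: "q < 1"
    and ps0: "0 < ps" and ps1: "ps \<le> 1" and db: "1 \<le> dbar" and du: "1 \<le> dund"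
    and NN: "max dbar dund < N"
begin

abbreviation "pol \<equiv> switching_policy dbar dund"
definition "KO s = orig_kernel p q ps (pol s) s"
definition "KT s = trunc_kernel N p q ps (pol s) s"
definition "tau d = (if dbar \<le> d then 1 - ps else 1::real)"
definition "tau' d = (if dund \<le> d then 1 - ps else 1::real)"
definition "r = (1-q)*(1-ps)"
definition "r' = (1-p)*(1-ps)"

lemma N2: "N \<ge> 2" "dbar < N" "dund < N" using NN db du by auto

lemma expG:
  fixes h :: "state \<Rightarrow> real"
  shows "measure_pmf.expectation (step_kernel g p q ps a (x,xh,d)) h =
    (if x = 0 then p else 1 - q) * (ps * h (res g a xh d True True) + (1-ps) * h (res g a xh d True False))
  + (1 - (if x = 0 then p else 1 - q)) * (ps * h (res g a xh d False True) + (1-ps) * h (res g a xh d False False))"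
  by (rule expK) (use p0 p1 q0 q1 ps0 ps1 in auto)

lemma EA: "measure_pmf.expectation (step_kernel g p q ps False (0,0,d)) h = (1-p) * h (0,0,0) + p * h (1,0,g d)"
  unfolding expG by (simp add: res_def algebra_simps)

lemma EB: "measure_pmf.expectation (step_kernel g p q ps False (1,1,d)) h = (1-q) * h (1,1,0) + q * h (0,1,g d)"
  unfolding expG by (simp add: res_def algebra_simps)

lemma EU: "measure_pmf.expectation (step_kernel g p q ps (dbar \<le> d) (1,0,d)) h =
   (1-q) * ((1 - tau d) * h (1,1,0) + tau d * h (1,0,g d)) + q * h (0,0,0)"
  unfolding expG by (simp add: res_def tau_def algebra_simps)

lemma EV: "measure_pmf.expectation (step_kernel g p q ps (dund \<le> d) (0,1,d)) h =
   (1-p) * ((1 - tau' d) * h (0,0,0) + tau' d * h (0,1,g d)) + p * h (1,1,0)"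
  unfolding expG by (simp add: res_def tau'_def algebra_simps)

lemma KO_A: "KO (0,0,0) = step_kernel Suc p q ps False (0,0,0)"
  by (simp add: KO_def orig_kernel_def switching_policy_def)
lemma KO_B: "KO (1,1,0) = step_kernel Suc p q ps False (1,1,0)"
  by (simp add: KO_def orig_kernel_def switching_policy_def)
lemma KO_U: "KO (1,0,d) = step_kernel Suc p q ps (dbar \<le> d) (1,0,d)"
  by (simp add: KO_def orig_kernel_def switching_policy_def)
lemma KO_V: "KO (0,1,d) = step_kernel Suc p q ps (dund \<le> d) (0,1,d)"
  by (simp add: KO_def orig_kernel_def switching_policy_def)
lemma KT_A: "KT (0,0,0) = step_kernel (\<lambda>d. min (Suc d) N) p q ps False (0,0,0)"
  by (simp add: KT_def trunc_kernel_def switching_policy_def)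
lemma KT_B: "KT (1,1,0) = step_kernel (\<lambda>d. min (Suc d) N) p q ps False (1,1,0)"
  by (simp add: KT_def trunc_kernel_def switching_policy_def)
lemma KT_U: "KT (1,0,d) = step_kernel (\<lambda>d. min (Suc d) N) p q ps (dbar \<le> d) (1,0,d)"
  by (simp add: KT_def trunc_kernel_def switching_policy_def)
lemma KT_V: "KT (0,1,d) = step_kernel (\<lambda>d. min (Suc d) N) p q ps (dund \<le> d) (0,1,d)"
  by (simp add: KT_def trunc_kernel_def switching_policy_def)

lemma KT_in: assumes "s \<in> trunc_states N" shows "set_pmf (KT s) \<subseteq> trunc_states N"
proof -
  have "s = (0,0,0) \<or> s = (1,1,0) \<or> (\<exists>d. s = (1,0,d) \<and> 1 \<le> d \<and> d \<le> N) \<or> (\<exists>d. s = (0,1,d) \<and> 1 \<le> d \<and> d \<le> N)"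
    using assms unfolding trunc_states_def by auto
  then show ?thesis
  proof (elim disjE exE conjE)
    assume s: "s = (0,0,0)" show ?thesis unfolding s(1) KT_A by (rule step_in_trunc) (use s N2 in auto)
  next
    assume s: "s = (1,1,0)" show ?thesis unfolding s(1) KT_B by (rule step_in_trunc) (use s N2 in auto)
  next
    fix d assume s: "s = (1,0,d)" "1 \<le> d" "d \<le> N" show ?thesis unfolding s(1) KT_U by (rule step_in_trunc) (use s N2 in auto)
  next
    fix d assume s: "s = (0,1,d)" "1 \<le> d" "d \<le> N" show ?thesis unfolding s(1) KT_V by (rule step_in_trunc) (use s N2 in auto)
  qed
qed

lemma KO_in: assumes "s \<in> orig_states" shows "set_pmf (KO s) \<subseteq> orig_states"
proof -
  have "s = (0,0,0) \<or> s = (1,1,0) \<or> (\<exists>d. s = (1,0,d) \<and> 1 \<le> d) \<or> (\<exists>d. s = (0,1,d) \<and> 1 \<le> d)"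
    using assms unfolding orig_states_def by auto
  then show ?thesis
  proof (elim disjE exE conjE)
    assume s: "s = (0,0,0)" show ?thesis unfolding s(1) KO_A by (rule step_in_orig) (use s in auto)
  next
    assume s: "s = (1,1,0)" show ?thesis unfolding s(1) KO_B by (rule step_in_orig) (use s in auto)
  next
    fix d assume s: "s = (1,0,d)" "1 \<le> d" show ?thesis unfolding s(1) KO_U by (rule step_in_orig) (use s in auto)
  next
    fix d assume s: "s = (0,1,d)" "1 \<le> d" show ?thesis unfolding s(1) KO_V by (rule step_in_orig) (use s in auto)
  qed
qed


lemma DynE:
  fixes h :: "state \<Rightarrow> real"
  assumes D: "set_pmf D \<subseteq> trunc_states N"
  shows "measure_pmf.expectation (bind_pmf D KT) h =
     pmf D (0,0,0) * ((1-p) * h (0,0,0) + p * h (1,0,1))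
   + pmf D (1,1,0) * ((1-q) * h (1,1,0) + q * h (0,1,1))
   + (\<Sum>d=1..N. pmf D (1,0,d) * ((1-q) * ((1 - tau d) * h (1,1,0) + tau d * h (1,0,min (Suc d) N)) + q * h (0,0,0)))
   + (\<Sum>d=1..N. pmf D (0,1,d) * ((1-p) * ((1 - tau' d) * h (0,0,0) + tau' d * h (0,1,min (Suc d) N)) + p * h (1,1,0)))"
  (is "_ = ?rhs")
proof -
  have "measure_pmf.expectation (bind_pmf D KT) h = (\<Sum>s\<in>trunc_states N. pmf D s * measure_pmf.expectation (KT s) h)"
    by (subst pmf_expectation_bind[where A="trunc_states N"])
       (auto simp: finite_trunc D KT_def trunc_kernel_def finite_step)
  also have "\<dots> = ?rhs"
    unfolding sum_trunc KT_A KT_B KT_U KT_V EA EB EU EV using N2 by simp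
  finally show ?thesis .
qed

lemma sum_lin: "(\<Sum>d\<in>S. w d * (y d - c d * a)) = (\<Sum>d\<in>S. w d * y d) - a * (\<Sum>d\<in>S. w d * (c d::real))"
proof -
  have "(\<Sum>d\<in>S. w d * (y d - c d * a)) = (\<Sum>d\<in>S. w d * y d - a * (w d * c d))"
    by (rule sum.cong) (auto simp: algebra_simps)
  then show ?thesis by (simp add: sum_subtractf sum_distrib_left)
qed

lemma res2:
  fixes f g :: "nat \<Rightarrow> real"
  assumes "\<And>t. f (Suc t) = c * g t" "fm = c * gm"
  shows "((\<Sum>t<T. f t) / real T - fm) - c * ((\<Sum>t<T. g t) / real T - gm) = (\<Sum>t<T. f t - f (Suc t)) / real T"
proof -
  have "(\<Sum>t<T. f t - f (Suc t)) = (\<Sum>t<T. f t) - c * (\<Sum>t<T. g t)"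
    by (simp add: assms(1) sum_subtractf sum_distrib_left)
  then show ?thesis using assms(2) by (cases "T = 0") (simp_all add: field_simps)
qed

lemma avg_lin:
  fixes F :: "nat \<Rightarrow> nat \<Rightarrow> real"
  shows "(\<Sum>d\<in>S. w d * ((\<Sum>t<T. F t d) / real T - m d)) = (\<Sum>t<T. \<Sum>d\<in>S. w d * F t d) / real T - (\<Sum>d\<in>S. w d * m d)"
proof -
  have "(\<Sum>d\<in>S. w d * ((\<Sum>t<T. F t d) / real T - m d)) = (\<Sum>d\<in>S. (\<Sum>t<T. w d * F t d) / real T - w d * m d)"
    by (rule sum.cong) (auto simp: right_diff_distrib sum_distrib_left)
  also have "\<dots> = (\<Sum>d\<in>S. \<Sum>t<T. w d * F t d) / real T - (\<Sum>d\<in>S. w d * m d)"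
    by (simp add: sum_subtractf sum_divide_distrib)
  also have "(\<Sum>d\<in>S. \<Sum>t<T. w d * F t d) = (\<Sum>t<T. \<Sum>d\<in>S. w d * F t d)" by (rule sum.swap)
  finally show ?thesis .
qed

lemma Ylim:
  fixes y v :: "nat \<Rightarrow> real"
  assumes y0: "y 0 = 0" and ys: "\<And>t. y (Suc t) = \<rho> * (y t + v t)"
    and v: "\<And>t. 0 \<le> v t" "\<And>t. v t \<le> 1" and r: "0 \<le> \<rho>" "\<rho> < 1"
    and L: "(\<lambda>T. (\<Sum>t<T. v t) / real T) \<longlonglongrightarrow> L"
  shows "(\<lambda>T. (\<Sum>t<T. y (Suc t)) / real T) \<longlonglongrightarrow> \<rho> / (1 - \<rho>) * L"
proof -
  have yb: "0 \<le> y t \<and> y t \<le> \<rho> / (1 - \<rho>)" for t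
  proof (induction t)
    case 0 then show ?case using y0 r by simp
  next
    case (Suc t)
    have "y (Suc t) \<le> \<rho> * (\<rho> / (1 - \<rho>) + 1)" unfolding ys
      using Suc v(2)[of t] r by (intro mult_left_mono) auto
    also have "\<dots> = \<rho> / (1 - \<rho>)" using r by (simp add: field_simps)
    finally show ?case using Suc v(1)[of t] r unfolding ys by simp
  qed
  have sh: "(\<Sum>t<T. y t) = (\<Sum>t<T. y (Suc t)) - y T" for T
  proof -
    have "(\<Sum>t<Suc T. y t) = y 0 + (\<Sum>t<T. y (Suc t))" by (rule sum.lessThan_Suc_shift)
    moreover have "(\<Sum>t<Suc T. y t) = (\<Sum>t<T. y t) + y T" by simp
    ultimately show ?thesis using y0 by simp
  qed
  have eq: "(\<Sum>t<T. y (Suc t)) / real T = (\<rho> * ((\<Sum>t<T. v t) / real T) - \<rho> * (y T / real T)) / (1 - \<rho>)" for T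
  proof -
    have "(\<Sum>t<T. y (Suc t)) = \<rho> * (\<Sum>t<T. y t) + \<rho> * (\<Sum>t<T. v t)"
      unfolding ys by (simp add: sum.distrib sum_distrib_left algebra_simps)
    then have "(1 - \<rho>) * (\<Sum>t<T. y (Suc t)) = \<rho> * (\<Sum>t<T. v t) - \<rho> * y T"
      unfolding sh by (simp add: algebra_simps)
    then have h: "(\<Sum>t<T. y (Suc t)) = (\<rho> * (\<Sum>t<T. v t) - \<rho> * y T) / (1 - \<rho>)"
      using r by (simp add: field_simps)
    show ?thesis unfolding h using r by (cases "T = 0") (simp_all add: field_simps)
  qed
  have yT: "(\<lambda>T. y T / real T) \<longlonglongrightarrow> 0"
  proof (rule Lim_null_comparison)
    show "\<forall>\<^sub>F T in sequentially. norm (y T / real T) \<le> (\<rho> / (1 - \<rho>)) / real T"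
    proof (intro always_eventually allI)
      fix T
      have "y T / real T \<le> (\<rho> / (1 - \<rho>)) / real T" by (rule divide_right_mono) (use yb in auto)
      moreover have "0 \<le> y T / real T" using yb[of T] by simp
      ultimately show "norm (y T / real T) \<le> (\<rho> / (1 - \<rho>)) / real T" by simp
    qed
    show "(\<lambda>T. (\<rho> / (1 - \<rho>)) / real T) \<longlonglongrightarrow> 0" by (rule lim_const_over_n)
  qed
  have "(\<lambda>T. (\<rho> * ((\<Sum>t<T. v t) / real T) - \<rho> * (y T / real T)) / (1 - \<rho>)) \<longlonglongrightarrow> (\<rho> * L - \<rho> * 0) / (1 - \<rho>)"
    by (rule tendsto_divide[OF tendsto_diff[OF tendsto_mult[OF tendsto_const L] tendsto_mult[OF tendsto_const yT]] tendsto_const]) (use r in simp)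
  then show ?thesis unfolding eq by simp
qed

lemma mult_if0: "x * (if P then y else 0) = (if P then x * y else (0::real))" by simp

lemma H1: "1 \<le> d \<Longrightarrow> (min (Suc d) N = Suc 0) = False" using N2 by (auto simp: min_def)
lemma H2: "Suc e < N \<Longrightarrow> (min (Suc d) N = Suc e) = (d = e)" by (auto simp: min_def)
lemma H3: "d \<le> N \<Longrightarrow> (min (Suc d) N = N) = (N - 1 \<le> d)" by (auto simp: min_def)

lemma S3: "(\<Sum>d=Suc 0..N. (if N - Suc 0 \<le> d then G d else (0::real))) = G (N - Suc 0) + G N"
proof -
  obtain m where m: "N = Suc (Suc m)" using N2 by (metis add_2_eq_Suc le_Suc_ex)
  have "(\<Sum>d=Suc 0..Suc (Suc m). (if Suc m \<le> d then G d else (0::real))) = G (Suc m) + G (Suc (Suc m))"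
    by (simp add: sum.cl_ivl_Suc)
  then show ?thesis by (simp add: m)
qed

lemma T1: assumes D: "set_pmf D \<subseteq> trunc_states N"
  shows "pmf (bind_pmf D KT) (1,0,1) = p * pmf D (0,0,0)"
  unfolding pmf_as_exp[of "bind_pmf D KT"] DynE[OF D]
  by (simp add: H1)

lemma T1': assumes D: "set_pmf D \<subseteq> trunc_states N"
  shows "pmf (bind_pmf D KT) (0,1,1) = q * pmf D (1,1,0)"
  unfolding pmf_as_exp[of "bind_pmf D KT"] DynE[OF D]
  by (simp add: H1)

lemma T2: assumes D: "set_pmf D \<subseteq> trunc_states N" and e: "1 \<le> e" "Suc e < N"
  shows "pmf (bind_pmf D KT) (1,0,Suc e) = (1-q) * tau e * pmf D (1,0,e)"
  unfolding pmf_as_exp[of "bind_pmf D KT"] DynE[OF D]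
  using e by (simp add: H2 mult_if0)

lemma T2': assumes D: "set_pmf D \<subseteq> trunc_states N" and e: "1 \<le> e" "Suc e < N"
  shows "pmf (bind_pmf D KT) (0,1,Suc e) = (1-p) * tau' e * pmf D (0,1,e)"
  unfolding pmf_as_exp[of "bind_pmf D KT"] DynE[OF D]
  using e by (simp add: H2 mult_if0)

lemma T3: assumes D: "set_pmf D \<subseteq> trunc_states N"
  shows "pmf (bind_pmf D KT) (1,0,N) = r * (pmf D (1,0,N-1) + pmf D (1,0,N))"
  unfolding pmf_as_exp[of "bind_pmf D KT"] DynE[OF D]
  using N2 apply (simp add: H3 mult_if0 S3) by (simp add: tau_def r_def algebra_simps)

lemma T3': assumes D: "set_pmf D \<subseteq> trunc_states N"
  shows "pmf (bind_pmf D KT) (0,1,N) = r' * (pmf D (0,1,N-1) + pmf D (0,1,N))"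
  unfolding pmf_as_exp[of "bind_pmf D KT"] DynE[OF D]
  using N2 apply (simp add: H3 mult_if0 S3) by (simp add: tau'_def r'_def algebra_simps)


lemma bind_in: "set_pmf D \<subseteq> trunc_states N \<Longrightarrow> set_pmf (bind_pmf D KT) \<subseteq> trunc_states N"
  using KT_in by (auto simp del: split_paired_All) blast

lemma expD_trunc:
  fixes h :: "state \<Rightarrow> real"
  assumes D: "set_pmf D \<subseteq> trunc_states N"
  shows "measure_pmf.expectation D h = h (0,0,0) * pmf D (0,0,0) + h (1,1,0) * pmf D (1,1,0)
     + (\<Sum>d=1..N. h (1,0,d) * pmf D (1,0,d)) + (\<Sum>d=1..N. h (0,1,d) * pmf D (0,1,d))"
  by (subst integral_measure_pmf_real[where A="trunc_states N"]) (use D finite_trunc in \<open>auto simp: sum_trunc\<close>)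

definition phi :: "state \<Rightarrow> real" where "phi s = (if fst (snd s) = 0 then 1 else 0)"

lemma T4: assumes D: "set_pmf D \<subseteq> trunc_states N"
  shows "pmf (bind_pmf D KT) (0,0,0) + (\<Sum>d=1..N. pmf (bind_pmf D KT) (1,0,d)) =
     pmf D (0,0,0) + (\<Sum>d=1..N. pmf D (1,0,d))
     - (\<Sum>d=1..N. (1-q) * (1 - tau d) * pmf D (1,0,d)) + (\<Sum>d=1..N. (1-p) * (1 - tau' d) * pmf D (0,1,d))"
proof -
  have "measure_pmf.expectation (bind_pmf D KT) phi = pmf (bind_pmf D KT) (0,0,0) + (\<Sum>d=1..N. pmf (bind_pmf D KT) (1,0,d))"
    unfolding expD_trunc[OF bind_in[OF D]] by (simp add: phi_def)
  moreover have "measure_pmf.expectation (bind_pmf D KT) phi = pmf D (0,0,0) + (\<Sum>d=1..N. pmf D (1,0,d) * ((1-q) * tau d + q))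
     + (\<Sum>d=1..N. pmf D (0,1,d) * ((1-p) * (1 - tau' d)))"
    unfolding DynE[OF D] by (simp add: phi_def algebra_simps)
  moreover have "(\<Sum>d=1..N. pmf D (1,0,d) * ((1-q) * tau d + q)) = (\<Sum>d=1..N. pmf D (1,0,d)) - (\<Sum>d=1..N. (1-q) * (1 - tau d) * pmf D (1,0,d))"
    by (simp add: sum_subtractf[symmetric] algebra_simps)
  moreover have "(\<Sum>d=1..N. pmf D (0,1,d) * ((1-p) * (1 - tau' d))) = (\<Sum>d=1..N. (1-p) * (1 - tau' d) * pmf D (0,1,d))"
    by (simp add: algebra_simps)
  ultimately show ?thesis by simp
qed

lemma T5: assumes D: "set_pmf D \<subseteq> trunc_states N"
  shows "pmf D (0,0,0) + pmf D (1,1,0) + (\<Sum>d=1..N. pmf D (1,0,d)) + (\<Sum>d=1..N. pmf D (0,1,d)) = 1"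
  using sum_pmf_eq_1[OF finite_trunc D] by (simp add: sum_trunc)


lemma r_bounds: "0 \<le> r" "r < 1" "0 \<le> r'" "r' < 1"
proof -
  have a: "0 \<le> 1 - ps" "1 - ps < 1" "0 < 1-q" "1-q < 1" "0 < 1-p" "1-p < 1" using p0 p1 q0 q1 ps0 ps1 by auto
  show "0 \<le> r" "0 \<le> r'" unfolding r_def r'_def using a by auto
  have "(1-q)*(1-ps) \<le> 1 - ps" using a mult_left_le_one_le[of "1-ps" "1-q"] by (simp add: mult.commute)
  then show "r < 1" unfolding r_def using a by linarith
  have "(1-p)*(1-ps) \<le> 1 - ps" using a mult_left_le_one_le[of "1-ps" "1-p"] by (simp add: mult.commute)
  then show "r' < 1" unfolding r'_def using a by linarith
qed

definition "cU d = (if d < N then p * (1-q)^(d-1) * (1-ps)^(d-dbar) else r/(1-r) * (p * (1-q)^(N-2) * (1-ps)^(N-1-dbar)))"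
definition "cV d = (if d < N then q * (1-p)^(d-1) * (1-ps)^(d-dund) else r'/(1-r') * (q * (1-p)^(N-2) * (1-ps)^(N-1-dund)))"

lemma cU1: "cU 1 = p" using N2 db by (simp add: cU_def)
lemma cV1: "cV 1 = q" using N2 du by (simp add: cV_def)
lemma cU2: assumes "1 \<le> e" "Suc e < N" shows "cU (Suc e) = (1-q) * tau e * cU e"
proof -
  obtain k where k: "e = Suc k" using assms(1) by (cases e) auto
  show ?thesis
  proof (cases "dbar \<le> e")
    case True
    then have "Suc e - dbar = Suc (e - dbar)" by (simp add: Suc_diff_le)
    then show ?thesis using assms True k unfolding cU_def tau_def by simp
  next
    case False
    then have "Suc e - dbar = 0" "e - dbar = 0" by auto
    then show ?thesis using assms False k unfolding cU_def tau_def by simp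
  qed
qed
lemma cV2: assumes "1 \<le> e" "Suc e < N" shows "cV (Suc e) = (1-p) * tau' e * cV e"
proof -
  obtain k where k: "e = Suc k" using assms(1) by (cases e) auto
  show ?thesis
  proof (cases "dund \<le> e")
    case True
    then have "Suc e - dund = Suc (e - dund)" by (simp add: Suc_diff_le)
    then show ?thesis using assms True k unfolding cV_def tau'_def by simp
  next
    case False
    then have "Suc e - dund = 0" "e - dund = 0" by auto
    then show ?thesis using assms False k unfolding cV_def tau'_def by simp
  qed
qed
lemma cU3: "(1 - r) * cU N = r * cU (N-1)"
proof -
  have "N - 1 - 1 = N - 2" "N - 1 < N" using N2 by auto
  then show ?thesis using r_bounds unfolding cU_def by simp
qed
lemma cV3: "(1 - r') * cV N = r' * cV (N-1)"
proof -
  have "N - 1 - 1 = N - 2" "N - 1 < N" using N2 by auto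
  then show ?thesis using r_bounds unfolding cV_def by simp
qed


lemma cU_nn: "0 \<le> cU d" using r_bounds p0 q1 ps1 unfolding cU_def by auto
lemma cV_nn: "0 \<le> cV d" using r_bounds q0 p1 ps1 unfolding cV_def by auto
lemma tau_le: "0 \<le> 1 - tau d" "0 \<le> 1 - tau' d" using ps0 ps1 unfolding tau_def tau'_def by auto

definition "alU = (\<Sum>d=1..N. (1-q) * (1 - tau d) * cU d)"
definition "alV = (\<Sum>d=1..N. (1-p) * (1 - tau' d) * cV d)"

lemma alU_pos: "0 < alU"
proof -
  have "(1-q) * (1 - tau dbar) * cU dbar \<le> alU" unfolding alU_def
    by (rule member_le_sum) (use db N2 q1 tau_le cU_nn in auto)
  moreover have "0 < (1-q) * (1 - tau dbar) * cU dbar"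
    using db N2 q1 p0 ps0 unfolding tau_def cU_def by auto
  ultimately show ?thesis by linarith
qed

lemma alV_nn: "0 \<le> alV" unfolding alV_def
  by (rule sum_nonneg) (use p1 tau_le cV_nn in auto)

lemma Hom:
  fixes x :: "nat \<Rightarrow> state \<Rightarrow> real"
  assumes h1: "(\<lambda>T. x T (1,0,1) - p * x T (0,0,0)) \<longlonglongrightarrow> 0"
    and h2: "\<And>e. 1 \<le> e \<Longrightarrow> Suc e < N \<Longrightarrow> (\<lambda>T. x T (1,0,Suc e) - (1-q) * tau e * x T (1,0,e)) \<longlonglongrightarrow> 0"
    and h3: "(\<lambda>T. x T (1,0,N) - r * (x T (1,0,N-1) + x T (1,0,N))) \<longlonglongrightarrow> 0"
    and h1': "(\<lambda>T. x T (0,1,1) - q * x T (1,1,0)) \<longlonglongrightarrow> 0"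
    and h2': "\<And>e. 1 \<le> e \<Longrightarrow> Suc e < N \<Longrightarrow> (\<lambda>T. x T (0,1,Suc e) - (1-p) * tau' e * x T (0,1,e)) \<longlonglongrightarrow> 0"
    and h3': "(\<lambda>T. x T (0,1,N) - r' * (x T (0,1,N-1) + x T (0,1,N))) \<longlonglongrightarrow> 0"
    and hc: "(\<lambda>T. (\<Sum>d=1..N. (1-q) * (1 - tau d) * x T (1,0,d)) - (\<Sum>d=1..N. (1-p) * (1 - tau' d) * x T (0,1,d))) \<longlonglongrightarrow> 0"
    and hn: "(\<lambda>T. x T (0,0,0) + x T (1,1,0) + (\<Sum>d=1..N. x T (1,0,d)) + (\<Sum>d=1..N. x T (0,1,d))) \<longlonglongrightarrow> 0"
  shows "\<And>s. s \<in> trunc_states N \<Longrightarrow> (\<lambda>T. x T s) \<longlonglongrightarrow> 0"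
proof -
  have EU: "\<And>d. 1 \<le> d \<Longrightarrow> d \<le> N \<Longrightarrow> (\<lambda>T. x T (1,0,d) - cU d * x T (0,0,0)) \<longlonglongrightarrow> 0"
    by (rule chain_lim[where y="\<lambda>T d. x T (1,0,d)" and z="\<lambda>T. x T (0,0,0)" and b="\<lambda>e. (1-q) * tau e", OF _ h1 h2 h3 _ cU1 cU2 cU3])
       (use N2 r_bounds in auto)
  have EV: "\<And>d. 1 \<le> d \<Longrightarrow> d \<le> N \<Longrightarrow> (\<lambda>T. x T (0,1,d) - cV d * x T (1,1,0)) \<longlonglongrightarrow> 0"
    by (rule chain_lim[where y="\<lambda>T d. x T (0,1,d)" and z="\<lambda>T. x T (1,1,0)" and b="\<lambda>e. (1-p) * tau' e", OF _ h1' h2' h3' _ cV1 cV2 cV3])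
       (use N2 r_bounds in auto)
  define xa where "xa T = x T (0,0,0)" for T
  define xb where "xb T = x T (1,1,0)" for T
  define P1 where "P1 = 1 + (\<Sum>d=1..N. cU d)"
  define P2 where "P2 = 1 + (\<Sum>d=1..N. cV d)"
  have P1: "1 \<le> P1" unfolding P1_def using cU_nn by (simp add: sum_nonneg)
  have P2: "1 \<le> P2" unfolding P2_def using cV_nn by (simp add: sum_nonneg)
  have SU: "(\<lambda>T. \<Sum>d=1..N. x T (1,0,d) - cU d * x T (0,0,0)) \<longlonglongrightarrow> 0"
    using tendsto_sum[of "{1..N}" "\<lambda>d T. x T (1,0,d) - cU d * x T (0,0,0)" "\<lambda>_. 0"] EU by simp
  have SV: "(\<lambda>T. \<Sum>d=1..N. x T (0,1,d) - cV d * x T (1,1,0)) \<longlonglongrightarrow> 0"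
    using tendsto_sum[of "{1..N}" "\<lambda>d T. x T (0,1,d) - cV d * x T (1,1,0)" "\<lambda>_. 0"] EV by simp
  have WU: "(\<lambda>T. \<Sum>d=1..N. (1-q) * (1 - tau d) * (x T (1,0,d) - cU d * x T (0,0,0))) \<longlonglongrightarrow> 0"
    by (rule tendsto_null_sum, rule tendsto_mult_right_zero, rule EU) auto
  have WV: "(\<lambda>T. \<Sum>d=1..N. (1-p) * (1 - tau' d) * (x T (0,1,d) - cV d * x T (1,1,0))) \<longlonglongrightarrow> 0"
    by (rule tendsto_null_sum, rule tendsto_mult_right_zero, rule EV) auto
  have n': "(\<lambda>T. P1 * xa T + P2 * xb T) \<longlonglongrightarrow> 0"
  proof -
    have "(\<lambda>T. (x T (0,0,0) + x T (1,1,0) + (\<Sum>d=1..N. x T (1,0,d)) + (\<Sum>d=1..N. x T (0,1,d)))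
       - (\<Sum>d=1..N. x T (1,0,d) - cU d * x T (0,0,0)) - (\<Sum>d=1..N. x T (0,1,d) - cV d * x T (1,1,0))) \<longlonglongrightarrow> 0 - 0 - 0"
      by (intro tendsto_diff hn SU SV)
    moreover have "\<And>T. (x T (0,0,0) + x T (1,1,0) + (\<Sum>d=1..N. x T (1,0,d)) + (\<Sum>d=1..N. x T (0,1,d)))
       - (\<Sum>d=1..N. x T (1,0,d) - cU d * x T (0,0,0)) - (\<Sum>d=1..N. x T (0,1,d) - cV d * x T (1,1,0)) = P1 * xa T + P2 * xb T"
      unfolding P1_def P2_def xa_def xb_def by (simp add: sum_subtractf sum_distrib_right algebra_simps) (simp add: sum_distrib_right[symmetric] mult.commute)
    ultimately show ?thesis by simp
  qed
  have k': "(\<lambda>T. alU * xa T - alV * xb T) \<longlonglongrightarrow> 0"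
  proof -
    have "(\<lambda>T. ((\<Sum>d=1..N. (1-q) * (1 - tau d) * x T (1,0,d)) - (\<Sum>d=1..N. (1-p) * (1 - tau' d) * x T (0,1,d)))
       - (\<Sum>d=1..N. (1-q) * (1 - tau d) * (x T (1,0,d) - cU d * x T (0,0,0)))
       + (\<Sum>d=1..N. (1-p) * (1 - tau' d) * (x T (0,1,d) - cV d * x T (1,1,0)))) \<longlonglongrightarrow> 0 - 0 + 0"
      by (intro tendsto_add tendsto_diff hc WU WV)
    moreover have "\<And>T. ((\<Sum>d=1..N. (1-q) * (1 - tau d) * x T (1,0,d)) - (\<Sum>d=1..N. (1-p) * (1 - tau' d) * x T (0,1,d)))
       - (\<Sum>d=1..N. (1-q) * (1 - tau d) * (x T (1,0,d) - cU d * x T (0,0,0)))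
       + (\<Sum>d=1..N. (1-p) * (1 - tau' d) * (x T (0,1,d) - cV d * x T (1,1,0))) = alU * xa T - alV * xb T"
      unfolding alU_def alV_def xa_def xb_def sum_lin by simp
    ultimately show ?thesis by simp
  qed
  define Det where "Det = alV * P1 + P2 * alU"
  have Det: "0 < Det" unfolding Det_def using alU_pos alV_nn P1 P2
    by (smt (verit) mult_nonneg_nonneg mult_pos_pos)
  have A: "xa \<longlonglongrightarrow> 0"
  proof -
    have "(\<lambda>T. (alV * (P1 * xa T + P2 * xb T) + P2 * (alU * xa T - alV * xb T)) / Det) \<longlonglongrightarrow> (alV * 0 + P2 * 0) / Det"
      by (intro tendsto_divide tendsto_add tendsto_mult tendsto_const n' k') (use Det in simp)
    moreover have "\<And>T. (alV * (P1 * xa T + P2 * xb T) + P2 * (alU * xa T - alV * xb T)) / Det = xa T"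
      using Det unfolding Det_def by (simp add: field_simps)
    ultimately show ?thesis by simp
  qed
  have B: "xb \<longlonglongrightarrow> 0"
  proof -
    have "(\<lambda>T. (alU * (P1 * xa T + P2 * xb T) - P1 * (alU * xa T - alV * xb T)) / Det) \<longlonglongrightarrow> (alU * 0 - P1 * 0) / Det"
      by (intro tendsto_divide tendsto_diff tendsto_mult tendsto_const n' k') (use Det in simp)
    moreover have "\<And>T. (alU * (P1 * xa T + P2 * xb T) - P1 * (alU * xa T - alV * xb T)) / Det = xb T"
      using Det unfolding Det_def by (simp add: field_simps)
    ultimately show ?thesis by simp
  qed
  fix s assume s: "s \<in> trunc_states N"
  then have "s = (0,0,0) \<or> s = (1,1,0) \<or> (\<exists>d. s = (1,0,d) \<and> 1 \<le> d \<and> d \<le> N) \<or> (\<exists>d. s = (0,1,d) \<and> 1 \<le> d \<and> d \<le> N)"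
    unfolding trunc_states_def by auto
  then show "(\<lambda>T. x T s) \<longlonglongrightarrow> 0"
  proof (elim disjE exE conjE)
    assume "s = (0,0,0)" then show ?thesis using A unfolding xa_def by simp
  next
    assume "s = (1,1,0)" then show ?thesis using B unfolding xb_def by simp
  next
    fix d assume d: "s = (1,0,d)" "1 \<le> d" "d \<le> N"
    have "(\<lambda>T. (x T (1,0,d) - cU d * x T (0,0,0)) + cU d * xa T) \<longlonglongrightarrow> 0 + cU d * 0"
      by (intro tendsto_add tendsto_mult tendsto_const EU A) (use d in auto)
    then show ?thesis using d unfolding xa_def by simp
  next
    fix d assume d: "s = (0,1,d)" "1 \<le> d" "d \<le> N"
    have "(\<lambda>T. (x T (0,1,d) - cV d * x T (1,1,0)) + cV d * xb T) \<longlonglongrightarrow> 0 + cV d * 0"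
      by (intro tendsto_add tendsto_mult tendsto_const EV B) (use d in auto)
    then show ?thesis using d unfolding xb_def by simp
  qed
qed


definition "DT t = state_dist (trunc_kernel N p q ps) pol t"

lemma KT_eta: "KT = (\<lambda>s. trunc_kernel N p q ps (pol s) s)" by (simp add: KT_def fun_eq_iff)
lemma KO_eta: "KO = (\<lambda>s. orig_kernel p q ps (pol s) s)" by (simp add: KO_def fun_eq_iff)

lemma DT_Suc: "DT (Suc t) = bind_pmf (DT t) KT"
  by (simp add: DT_def KT_eta)

lemma DT_in: "set_pmf (DT t) \<subseteq> trunc_states N"
proof (induction t)
  case 0 then show ?case by (simp add: DT_def trunc_states_def)
next
  case (Suc t) then show ?case unfolding DT_Suc by (rule bind_in)
qed

lemma tel_lim:
  fixes g :: "nat \<Rightarrow> real"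
  assumes "\<And>t. \<bar>g t\<bar> \<le> B"
  shows "(\<lambda>T. (\<Sum>t<T. g t - g (Suc t)) / real T) \<longlonglongrightarrow> 0"
proof (rule Lim_null_comparison)
  show "\<forall>\<^sub>F T in sequentially. norm ((\<Sum>t<T. g t - g (Suc t)) / real T) \<le> (2*B) / real T"
  proof (rule always_eventually, rule allI)
    fix T
    have "(\<Sum>t<T. g t - g (Suc t)) = g 0 - g T" by (rule sum_lessThan_telescope')
    moreover have "\<bar>g 0 - g T\<bar> \<le> 2 * B" using assms[of 0] assms[of T] by linarith
    ultimately show "norm ((\<Sum>t<T. g t - g (Suc t)) / real T) \<le> (2*B) / real T"
      by (cases "T = 0") (auto simp: divide_right_mono)
  qed
  show "(\<lambda>T. (2*B) / real T) \<longlonglongrightarrow> 0" by (rule lim_const_over_n)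
qed


lemma ces_conv:
  assumes st: "set_pmf \<mu> \<subseteq> trunc_states N" "bind_pmf \<mu> KT = \<mu>"
    and s: "s \<in> trunc_states N"
  shows "(\<lambda>T. (\<Sum>t<T. pmf (DT t) s) / real T) \<longlonglongrightarrow> pmf \<mu> s"
proof -
  define u where "u t s = pmf (DT t) s" for t s
  define x where "x T s = (\<Sum>t<T. u t s) / real T - pmf \<mu> s" for T s
  have uS: "\<And>t s. u (Suc t) s = pmf (bind_pmf (DT t) KT) s" unfolding u_def DT_Suc by simp
  note D = DT_in
  have mu: "\<And>s. pmf \<mu> s = pmf (bind_pmf \<mu> KT) s" using st by simp
  have ub: "\<And>t s. \<bar>u t s\<bar> \<le> 1" unfolding u_def by (simp add: pmf_le_1)
  have r1: "\<And>t. u (Suc t) (1,0,1) = p * u t (0,0,0)" unfolding u_def DT_Suc using T1[OF D] by simp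
  have r1': "\<And>t. u (Suc t) (0,1,1) = q * u t (1,1,0)" unfolding u_def DT_Suc using T1'[OF D] by simp
  have r2: "\<And>t e. 1 \<le> e \<Longrightarrow> Suc e < N \<Longrightarrow> u (Suc t) (1,0,Suc e) = (1-q) * tau e * u t (1,0,e)"
    unfolding u_def DT_Suc using T2[OF D] by simp
  have r2': "\<And>t e. 1 \<le> e \<Longrightarrow> Suc e < N \<Longrightarrow> u (Suc t) (0,1,Suc e) = (1-p) * tau' e * u t (0,1,e)"
    unfolding u_def DT_Suc using T2'[OF D] by simp
  have r3: "\<And>t. u (Suc t) (1,0,N) = r * (u t (1,0,N-1) + u t (1,0,N))" unfolding u_def DT_Suc using T3[OF D] by simp
  have r3': "\<And>t. u (Suc t) (0,1,N) = r' * (u t (0,1,N-1) + u t (0,1,N))" unfolding u_def DT_Suc using T3'[OF D] by simp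
  have m1: "pmf \<mu> (1,0,1) = p * pmf \<mu> (0,0,0)" using T1[OF st(1)] st(2) by simp
  have m1': "pmf \<mu> (0,1,1) = q * pmf \<mu> (1,1,0)" using T1'[OF st(1)] st(2) by simp
  have m2: "\<And>e. 1 \<le> e \<Longrightarrow> Suc e < N \<Longrightarrow> pmf \<mu> (1,0,Suc e) = (1-q) * tau e * pmf \<mu> (1,0,e)"
    using T2[OF st(1)] st(2) by simp
  have m2': "\<And>e. 1 \<le> e \<Longrightarrow> Suc e < N \<Longrightarrow> pmf \<mu> (0,1,Suc e) = (1-p) * tau' e * pmf \<mu> (0,1,e)"
    using T2'[OF st(1)] st(2) by simp
  have m3: "pmf \<mu> (1,0,N) = r * (pmf \<mu> (1,0,N-1) + pmf \<mu> (1,0,N))" using T3[OF st(1)] st(2) by simp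
  have m3': "pmf \<mu> (0,1,N) = r' * (pmf \<mu> (0,1,N-1) + pmf \<mu> (0,1,N))" using T3'[OF st(1)] st(2) by simp
  have "(\<lambda>T. x T s) \<longlonglongrightarrow> 0"
  proof (rule Hom[OF _ _ _ _ _ _ _ _ s])
    show "(\<lambda>T. x T (1,0,1) - p * x T (0,0,0)) \<longlonglongrightarrow> 0"
      unfolding x_def
      by (subst res2[where f="\<lambda>t. u t (1,0,1)" and g="\<lambda>t. u t (0,0,0)"], rule r1, rule m1) (rule tel_lim, rule ub)
    show "(\<lambda>T. x T (0,1,1) - q * x T (1,1,0)) \<longlonglongrightarrow> 0"
      unfolding x_def
      by (subst res2[where f="\<lambda>t. u t (0,1,1)" and g="\<lambda>t. u t (1,1,0)"], rule r1', rule m1') (rule tel_lim, rule ub)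
    fix e assume e: "1 \<le> e" "Suc e < N"
    show "(\<lambda>T. x T (1,0,Suc e) - (1-q) * tau e * x T (1,0,e)) \<longlonglongrightarrow> 0"
      unfolding x_def
      by (subst res2[where f="\<lambda>t. u t (1,0,Suc e)" and g="\<lambda>t. u t (1,0,e)"], rule r2[OF e], rule m2[OF e]) (rule tel_lim, rule ub)
    show "(\<lambda>T. x T (0,1,Suc e) - (1-p) * tau' e * x T (0,1,e)) \<longlonglongrightarrow> 0"
      unfolding x_def
      by (subst res2[where f="\<lambda>t. u t (0,1,Suc e)" and g="\<lambda>t. u t (0,1,e)"], rule r2'[OF e], rule m2'[OF e]) (rule tel_lim, rule ub)
  next
    have "\<And>T. x T (1,0,N) - r * (x T (1,0,N-1) + x T (1,0,N)) =
      ((\<Sum>t<T. u t (1,0,N)) / real T - pmf \<mu> (1,0,N)) - r * ((\<Sum>t<T. u t (1,0,N-1) + u t (1,0,N)) / real T - (pmf \<mu> (1,0,N-1) + pmf \<mu> (1,0,N)))"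
      unfolding x_def by (simp add: sum.distrib add_divide_distrib)
    also have "\<And>T. \<dots> T = (\<Sum>t<T. u t (1,0,N) - u (Suc t) (1,0,N)) / real T"
      by (rule res2, rule r3, rule m3)
    finally have eq: "\<And>T. x T (1,0,N) - r * (x T (1,0,N-1) + x T (1,0,N)) = (\<Sum>t<T. u t (1,0,N) - u (Suc t) (1,0,N)) / real T" .
    show "(\<lambda>T. x T (1,0,N) - r * (x T (1,0,N-1) + x T (1,0,N))) \<longlonglongrightarrow> 0"
      unfolding eq by (rule tel_lim, rule ub)
  next
    have "\<And>T. x T (0,1,N) - r' * (x T (0,1,N-1) + x T (0,1,N)) =
      ((\<Sum>t<T. u t (0,1,N)) / real T - pmf \<mu> (0,1,N)) - r' * ((\<Sum>t<T. u t (0,1,N-1) + u t (0,1,N)) / real T - (pmf \<mu> (0,1,N-1) + pmf \<mu> (0,1,N)))"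
      unfolding x_def by (simp add: sum.distrib add_divide_distrib)
    also have "\<And>T. \<dots> T = (\<Sum>t<T. u t (0,1,N) - u (Suc t) (0,1,N)) / real T"
      by (rule res2, rule r3', rule m3')
    finally have eq: "\<And>T. x T (0,1,N) - r' * (x T (0,1,N-1) + x T (0,1,N)) = (\<Sum>t<T. u t (0,1,N) - u (Suc t) (0,1,N)) / real T" .
    show "(\<lambda>T. x T (0,1,N) - r' * (x T (0,1,N-1) + x T (0,1,N))) \<longlonglongrightarrow> 0"
      unfolding eq by (rule tel_lim, rule ub)
  next
    define w where "w d = (1-q) * (1 - tau d)" for d
    define w' where "w' d = (1-p) * (1 - tau' d)" for d
    define S0 where "S0 t = u t (0,0,0) + (\<Sum>d=1..N. u t (1,0,d))" for t
    have S0b: "\<bar>S0 t\<bar> \<le> 1" for t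
    proof -
      have "0 \<le> S0 t" unfolding S0_def u_def by (simp add: sum_nonneg)
      moreover have "S0 t \<le> 1"
      proof -
        have a: "0 \<le> pmf (DT t) (1,1,0)" "0 \<le> (\<Sum>d=1..N. pmf (DT t) (0,1,d))" by (auto simp: sum_nonneg)
        show ?thesis using T5[OF D, of t] a unfolding S0_def u_def by linarith
      qed
      ultimately show ?thesis by simp
    qed
    have S0r: "(\<Sum>d=1..N. w d * u t (1,0,d)) - (\<Sum>d=1..N. w' d * u t (0,1,d)) = S0 t - S0 (Suc t)" for t
      using T4[OF D, of t] unfolding S0_def u_def w_def w'_def DT_Suc by simp
    have muc: "(\<Sum>d=1..N. w d * pmf \<mu> (1,0,d)) - (\<Sum>d=1..N. w' d * pmf \<mu> (0,1,d)) = 0"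
      using T4[OF st(1)] st(2) unfolding w_def w'_def by simp
    have eq: "(\<Sum>d=1..N. (1-q) * (1 - tau d) * x T (1,0,d)) - (\<Sum>d=1..N. (1-p) * (1 - tau' d) * x T (0,1,d))
       = (\<Sum>t<T. S0 t - S0 (Suc t)) / real T" for T
    proof -
      have "(\<Sum>d=1..N. (1-q) * (1 - tau d) * x T (1,0,d)) - (\<Sum>d=1..N. (1-p) * (1 - tau' d) * x T (0,1,d))
        = ((\<Sum>t<T. \<Sum>d=1..N. w d * u t (1,0,d)) / real T - (\<Sum>d=1..N. w d * pmf \<mu> (1,0,d)))
        - ((\<Sum>t<T. \<Sum>d=1..N. w' d * u t (0,1,d)) / real T - (\<Sum>d=1..N. w' d * pmf \<mu> (0,1,d)))"
        unfolding x_def w_def[symmetric] w'_def[symmetric]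
        by (simp only: avg_lin[where F="\<lambda>t d. u t (1,0,d)"] avg_lin[where F="\<lambda>t d. u t (0,1,d)"])
      also have "\<dots> = (\<Sum>t<T. (\<Sum>d=1..N. w d * u t (1,0,d)) - (\<Sum>d=1..N. w' d * u t (0,1,d))) / real T"
        using muc by (simp add: sum_subtractf diff_divide_distrib)
      also have "\<dots> = (\<Sum>t<T. S0 t - S0 (Suc t)) / real T" by (simp only: S0r)
      finally show ?thesis .
    qed
    show "(\<lambda>T. (\<Sum>d=1..N. (1-q) * (1 - tau d) * x T (1,0,d)) - (\<Sum>d=1..N. (1-p) * (1 - tau' d) * x T (0,1,d))) \<longlonglongrightarrow> 0"
      unfolding eq by (rule tel_lim, rule S0b)
  next
    have eq: "x T (0,0,0) + x T (1,1,0) + (\<Sum>d=1..N. x T (1,0,d)) + (\<Sum>d=1..N. x T (0,1,d)) = 0" if T: "T > 0" for T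
    proof -
      have "x T (0,0,0) + x T (1,1,0) + (\<Sum>d=1..N. x T (1,0,d)) + (\<Sum>d=1..N. x T (0,1,d))
        = (\<Sum>t<T. u t (0,0,0) + u t (1,1,0) + (\<Sum>d=1..N. u t (1,0,d)) + (\<Sum>d=1..N. u t (0,1,d))) / real T
          - (pmf \<mu> (0,0,0) + pmf \<mu> (1,1,0) + (\<Sum>d=1..N. pmf \<mu> (1,0,d)) + (\<Sum>d=1..N. pmf \<mu> (0,1,d)))"
        using avg_lin[where F="\<lambda>t d. u t (1,0,d)" and w="\<lambda>_. 1" and m="\<lambda>d. pmf \<mu> (1,0,d)" and S="{1..N}" and T=T]
          avg_lin[where F="\<lambda>t d. u t (0,1,d)" and w="\<lambda>_. 1" and m="\<lambda>d. pmf \<mu> (0,1,d)" and S="{1..N}" and T=T]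
        unfolding x_def by (simp add: sum.distrib add_divide_distrib)
      also have "\<dots> = 0" using T5[OF D] T5[OF st(1)] T unfolding u_def by simp
      finally show ?thesis .
    qed
    show "(\<lambda>T. x T (0,0,0) + x T (1,1,0) + (\<Sum>d=1..N. x T (1,0,d)) + (\<Sum>d=1..N. x T (0,1,d))) \<longlonglongrightarrow> 0"
      by (rule tendsto_eventually) (use eq in \<open>auto intro: eventually_sequentiallyI[of 1]\<close>)
  qed
  then show ?thesis unfolding x_def u_def by (rule LIM_zero_cancel)
qed


lemma uniq:
  assumes "set_pmf \<mu>1 \<subseteq> trunc_states N" "bind_pmf \<mu>1 KT = \<mu>1"
    and "set_pmf \<mu>2 \<subseteq> trunc_states N" "bind_pmf \<mu>2 KT = \<mu>2"
  shows "\<mu>1 = \<mu>2"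
proof (rule pmf_eqI)
  fix s
  show "pmf \<mu>1 s = pmf \<mu>2 s"
  proof (cases "s \<in> trunc_states N")
    case True
    show ?thesis using LIMSEQ_unique[OF ces_conv[OF assms(1,2) True] ces_conv[OF assms(3,4) True]] .
  next
    case False
    then have "s \<notin> set_pmf \<mu>1" "s \<notin> set_pmf \<mu>2" using assms by auto
    then show ?thesis by (simp add: set_pmf_eq)
  qed
qed

definition "DO t = state_dist (orig_kernel p q ps) pol t"

lemma DO_Suc: "DO (Suc t) = bind_pmf (DO t) KO"
  by (simp add: DO_def KO_eta)

lemma DO_in: "set_pmf (DO t) \<subseteq> orig_states"
proof (induction t)
  case 0 then show ?case by (simp add: DO_def orig_states_def)
next
  case (Suc t) then show ?case unfolding DO_Suc using KO_in by (auto simp del: split_paired_All) blast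
qed

lemma finite_KO: "finite (set_pmf (KO s))" unfolding KO_def orig_kernel_def by (rule finite_step)

lemma DO_fin: "finite (set_pmf (DO t))"
proof (induction t)
  case 0 then show ?case by (simp add: DO_def)
next
  case (Suc t) then show ?case unfolding DO_Suc by (simp add: finite_KO)
qed

abbreviation "fn \<equiv> fN N"

lemma pol_fN: "pol (fn s) = pol s"
  using NN by (cases s) (auto simp: fN_def switching_policy_def)

lemma lumpK: "KT (fn s) = map_pmf fn (KO s)"
  unfolding KT_def KO_def using lump[OF NN] .

lemma DT_DO: "DT t = map_pmf fn (DO t)"
proof (induction t)
  case 0 then show ?case by (simp add: DT_def DO_def fN_def)
next
  case (Suc t)
  show ?case unfolding DT_Suc DO_Suc Suc bind_map_pmf map_bind_pmf lumpK[symmetric] ..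
qed

lemma fN_in: "s \<in> orig_states \<Longrightarrow> fn s \<in> trunc_states N"
  using N2 unfolding orig_states_def trunc_states_def fN_def by auto

lemma map_stat:
  assumes "set_pmf \<nu> \<subseteq> orig_states" "bind_pmf \<nu> KO = \<nu>"
  shows "set_pmf (map_pmf fn \<nu>) \<subseteq> trunc_states N" "bind_pmf (map_pmf fn \<nu>) KT = map_pmf fn \<nu>"
proof -
  show "set_pmf (map_pmf fn \<nu>) \<subseteq> trunc_states N" using assms(1) fN_in by auto
  have "bind_pmf (map_pmf fn \<nu>) KT = bind_pmf \<nu> (\<lambda>s. map_pmf fn (KO s))"
    unfolding bind_map_pmf lumpK[symmetric] by (simp add: comp_def)
  also have "\<dots> = map_pmf fn (bind_pmf \<nu> KO)" by (simp add: map_bind_pmf)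
  finally show "bind_pmf (map_pmf fn \<nu>) KT = map_pmf fn \<nu>" using assms(2) by simp
qed

lemma pKO_A: "pmf (KO (0,0,0)) s0 = (1-p) * (if s0 = (0,0,0) then 1 else 0) + p * (if s0 = (1,0,1) then 1 else 0)"
  unfolding pmf_as_exp KO_A EA by simp
lemma pKO_B: "pmf (KO (1,1,0)) s0 = (1-q) * (if s0 = (1,1,0) then 1 else 0) + q * (if s0 = (0,1,1) then 1 else 0)"
  unfolding pmf_as_exp KO_B EB by simp
lemma pKO_U: "pmf (KO (1,0,d)) s0 = (1-q) * ((1 - tau d) * (if s0 = (1,1,0) then 1 else 0) + tau d * (if s0 = (1,0,Suc d) then 1 else 0)) + q * (if s0 = (0,0,0) then 1 else 0)"
  unfolding pmf_as_exp KO_U EU by simp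
lemma pKO_V: "pmf (KO (0,1,d)) s0 = (1-p) * ((1 - tau' d) * (if s0 = (0,0,0) then 1 else 0) + tau' d * (if s0 = (0,1,Suc d) then 1 else 0)) + p * (if s0 = (1,1,0) then 1 else 0)"
  unfolding pmf_as_exp KO_V EV by simp

lemma orig_bal:
  assumes st: "set_pmf \<nu> \<subseteq> orig_states" "bind_pmf \<nu> KO = \<nu>"
    and pred: "\<And>a. a \<in> orig_states \<Longrightarrow> pmf (KO a) s0 \<noteq> 0 \<Longrightarrow> a = s1"
  shows "pmf \<nu> s0 = pmf (KO s1) s0 * pmf \<nu> s1"
proof -
  have "pmf \<nu> s0 = pmf (bind_pmf \<nu> KO) s0" using st by simp
  also have "\<dots> = measure_pmf.expectation \<nu> (\<lambda>s. pmf (KO s) s0)" by (rule pmf_bind)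
  also have "\<dots> = (\<Sum>a\<in>{s1}. pmf (KO a) s0 * pmf \<nu> a)"
    by (rule integral_measure_pmf_real) (use st pred in auto)
  finally show ?thesis by simp
qed

lemma orig_U1:
  assumes st: "set_pmf \<nu> \<subseteq> orig_states" "bind_pmf \<nu> KO = \<nu>"
  shows "pmf \<nu> (1,0,1) = p * pmf \<nu> (0,0,0)"
proof -
  have "pmf \<nu> (1,0,1) = pmf (KO (0,0,0)) (1,0,1) * pmf \<nu> (0,0,0)"
  proof (rule orig_bal[OF st])
    fix a assume "a \<in> orig_states" "pmf (KO a) (1,0,1) \<noteq> 0"
    then show "a = (0,0,0)" unfolding orig_states_def by (auto simp: pKO_B[simplified] pKO_U[simplified] pKO_V[simplified])
  qed
  then show ?thesis by (simp add: pKO_A[simplified])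
qed

lemma orig_Us:
  assumes st: "set_pmf \<nu> \<subseteq> orig_states" "bind_pmf \<nu> KO = \<nu>" and e: "1 \<le> e"
  shows "pmf \<nu> (1,0,Suc e) = (1-q) * tau e * pmf \<nu> (1,0,e)"
proof -
  have "pmf \<nu> (1,0,Suc e) = pmf (KO (1,0,e)) (1,0,Suc e) * pmf \<nu> (1,0,e)"
  proof (rule orig_bal[OF st])
    fix a assume "a \<in> orig_states" "pmf (KO a) (1,0,Suc e) \<noteq> 0"
    then show "a = (1,0,e)" using e unfolding orig_states_def by (auto simp: pKO_A[simplified] pKO_B[simplified] pKO_U[simplified] pKO_V[simplified] split: if_splits)
  qed
  then show ?thesis by (simp add: pKO_U[simplified])
qed

lemma orig_closed:
  assumes st: "set_pmf \<nu> \<subseteq> orig_states" "bind_pmf \<nu> KO = \<nu>"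
  shows "1 \<le> d \<Longrightarrow> pmf \<nu> (1,0,d) = p * pmf \<nu> (0,0,0) * (1-q)^(d-1) * (1-ps)^(d-dbar)"
proof (induction d rule: nat_induct_at_least)
  case base then show ?case using orig_U1[OF st] db by simp
next
  case (Suc e)
  show ?case
  proof (cases "dbar \<le> e")
    case True
    then have "Suc e - dbar = Suc (e - dbar)" by (simp add: Suc_diff_le)
    then show ?thesis using orig_Us[OF st Suc(1)] Suc True by (cases e) (auto simp: tau_def)
  next
    case False
    then have "Suc e - dbar = 0" "e - dbar = 0" by auto
    then show ?thesis using orig_Us[OF st Suc(1)] Suc False by (cases e) (auto simp: tau_def)
  qed
qed


definition "hU s = (case s of (x,xh,d) \<Rightarrow> if x = 1 \<and> xh = 0 then real (d - N) else 0)"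
definition "hV s = (case s of (x,xh,d) \<Rightarrow> if x = 0 \<and> xh = 1 then real (d - N) else 0)"
definition "jU s = (if fn s = (1,0,N) then 1 else (0::real))"
definition "jV s = (if fn s = (0,1,N) then 1 else (0::real))"

lemma cost_split: "state_cost \<beta> s = state_cost \<beta> (fn s) + \<beta> * hU s + (1-\<beta>) * hV s"
proof -
  obtain x xh d where s: "s = (x,xh,d)" by (cases s) auto
  have "real d = real (min d N) + real (d - N)" by simp
  then show ?thesis unfolding s by (simp add: fN_def state_cost_def hU_def hV_def algebra_simps)
qed

lemma EhU: assumes "s \<in> orig_states" shows "measure_pmf.expectation (KO s) hU = r * (hU s + jU s)"
proof -
  have "s = (0,0,0) \<or> s = (1,1,0) \<or> (\<exists>d. s = (1,0,d) \<and> 1 \<le> d) \<or> (\<exists>d. s = (0,1,d) \<and> 1 \<le> d)"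
    using assms unfolding orig_states_def by auto
  then show ?thesis
  proof (elim disjE exE conjE)
    assume s: "s = (0,0,0)" show ?thesis unfolding s KO_A EA using N2 by (simp add: hU_def jU_def fN_def)
  next
    assume s: "s = (1,1,0)" show ?thesis unfolding s KO_B EB using N2 by (simp add: hU_def jU_def fN_def)
  next
    fix d assume s: "s = (1,0,d)" "1 \<le> d"
    show ?thesis
    proof (cases "N \<le> d")
      case True
      then have "real (Suc d - N) = real (d - N) + 1" by (simp add: Suc_diff_le)
      then show ?thesis unfolding s(1) KO_U EU using True N2 by (simp add: hU_def jU_def fN_def tau_def r_def)
    next
      case False
      then show ?thesis unfolding s(1) KO_U EU using N2 by (simp add: hU_def jU_def fN_def)
    qed
  next
    fix d assume s: "s = (0,1,d)" "1 \<le> d"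
    show ?thesis unfolding s(1) KO_V EV using N2 by (simp add: hU_def jU_def fN_def)
  qed
qed

lemma EhV: assumes "s \<in> orig_states" shows "measure_pmf.expectation (KO s) hV = r' * (hV s + jV s)"
proof -
  have "s = (0,0,0) \<or> s = (1,1,0) \<or> (\<exists>d. s = (1,0,d) \<and> 1 \<le> d) \<or> (\<exists>d. s = (0,1,d) \<and> 1 \<le> d)"
    using assms unfolding orig_states_def by auto
  then show ?thesis
  proof (elim disjE exE conjE)
    assume s: "s = (0,0,0)" show ?thesis unfolding s KO_A EA using N2 by (simp add: hV_def jV_def fN_def)
  next
    assume s: "s = (1,1,0)" show ?thesis unfolding s KO_B EB using N2 by (simp add: hV_def jV_def fN_def)
  next
    fix d assume s: "s = (1,0,d)" "1 \<le> d"
    show ?thesis unfolding s(1) KO_U EU using N2 by (simp add: hV_def jV_def fN_def)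
  next
    fix d assume s: "s = (0,1,d)" "1 \<le> d"
    show ?thesis
    proof (cases "N \<le> d")
      case True
      then have "real (Suc d - N) = real (d - N) + 1" by (simp add: Suc_diff_le)
      then show ?thesis unfolding s(1) KO_V EV using True N2 by (simp add: hV_def jV_def fN_def tau'_def r'_def)
    next
      case False
      then show ?thesis unfolding s(1) KO_V EV using N2 by (simp add: hV_def jV_def fN_def)
    qed
  qed
qed

lemma expDO: fixes f :: "state \<Rightarrow> real" shows "measure_pmf.expectation (DO t) f = (\<Sum>a\<in>set_pmf (DO t). f a * pmf (DO t) a)"
  by (rule integral_measure_pmf_real) (auto simp: DO_fin)

lemma exp_bindO: fixes h :: "state \<Rightarrow> real" shows "measure_pmf.expectation (DO (Suc t)) h = measure_pmf.expectation (DO t) (\<lambda>s. measure_pmf.expectation (KO s) h)"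
  unfolding DO_Suc
  by (subst pmf_expectation_bind[where A="set_pmf (DO t)"]) (auto simp: DO_fin finite_KO expDO mult.commute)

lemma y_rec: "measure_pmf.expectation (DO (Suc t)) hU = r * (measure_pmf.expectation (DO t) hU + pmf (DT t) (1,0,N))"
proof -
  have "measure_pmf.expectation (DO (Suc t)) hU = (\<Sum>a\<in>set_pmf (DO t). r * (hU a + jU a) * pmf (DO t) a)"
    unfolding exp_bindO expDO[of t]
  proof (intro sum.cong refl)
    fix a assume "a \<in> set_pmf (DO t)"
    then have "a \<in> orig_states" using DO_in by blast
    then show "measure_pmf.expectation (KO a) hU * pmf (DO t) a = r * (hU a + jU a) * pmf (DO t) a"
      using EhU by simp
  qed
  also have "\<dots> = r * ((\<Sum>a\<in>set_pmf (DO t). hU a * pmf (DO t) a) + (\<Sum>a\<in>set_pmf (DO t). jU a * pmf (DO t) a))"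
    by (simp add: sum_distrib_left sum.distrib algebra_simps)
  also have "(\<Sum>a\<in>set_pmf (DO t). jU a * pmf (DO t) a) = pmf (DT t) (1,0,N)"
  proof -
    have "pmf (DT t) (1,0,N) = measure_pmf.expectation (DO t) (\<lambda>s. if fn s = (1,0,N) then 1 else 0)"
      unfolding DT_DO pmf_as_exp[of "map_pmf fn (DO t)"] integral_map_pmf ..
    then show ?thesis unfolding expDO jU_def by simp
  qed
  finally show ?thesis unfolding expDO by simp
qed

lemma z_rec: "measure_pmf.expectation (DO (Suc t)) hV = r' * (measure_pmf.expectation (DO t) hV + pmf (DT t) (0,1,N))"
proof -
  have "measure_pmf.expectation (DO (Suc t)) hV = (\<Sum>a\<in>set_pmf (DO t). r' * (hV a + jV a) * pmf (DO t) a)"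
    unfolding exp_bindO expDO[of t]
  proof (intro sum.cong refl)
    fix a assume "a \<in> set_pmf (DO t)"
    then have "a \<in> orig_states" using DO_in by blast
    then show "measure_pmf.expectation (KO a) hV * pmf (DO t) a = r' * (hV a + jV a) * pmf (DO t) a"
      using EhV by simp
  qed
  also have "\<dots> = r' * ((\<Sum>a\<in>set_pmf (DO t). hV a * pmf (DO t) a) + (\<Sum>a\<in>set_pmf (DO t). jV a * pmf (DO t) a))"
    by (simp add: sum_distrib_left sum.distrib algebra_simps)
  also have "(\<Sum>a\<in>set_pmf (DO t). jV a * pmf (DO t) a) = pmf (DT t) (0,1,N)"
  proof -
    have "pmf (DT t) (0,1,N) = measure_pmf.expectation (DO t) (\<lambda>s. if fn s = (0,1,N) then 1 else 0)"
      unfolding DT_DO pmf_as_exp[of "map_pmf fn (DO t)"] integral_map_pmf ..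
    then show ?thesis unfolding expDO jV_def by simp
  qed
  finally show ?thesis unfolding expDO by simp
qed


lemma stage_pt: "stage_cost (orig_kernel p q ps) \<beta> lam s (pol s) =
   stage_cost (trunc_kernel N p q ps) \<beta> lam (fn s) (pol (fn s))
   + \<beta> * measure_pmf.expectation (KO s) hU + (1-\<beta>) * measure_pmf.expectation (KO s) hV"
proof -
  have I: "integrable (measure_pmf (KO s)) f" for f :: "state \<Rightarrow> real"
    by (rule integrable_measure_pmf_finite[OF finite_KO])
  have "measure_pmf.expectation (KO s) (state_cost \<beta>)
      = measure_pmf.expectation (KO s) (\<lambda>s'. state_cost \<beta> (fn s') + \<beta> * hU s' + (1-\<beta>) * hV s')"
    by (rule arg_cong[where f="measure_pmf.expectation (KO s)"], rule ext, rule cost_split)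
  also have "\<dots> = measure_pmf.expectation (KO s) (\<lambda>s'. state_cost \<beta> (fn s')) + \<beta> * measure_pmf.expectation (KO s) hU + (1-\<beta>) * measure_pmf.expectation (KO s) hV"
    by (simp add: I integral_add)
  also have "measure_pmf.expectation (KO s) (\<lambda>s'. state_cost \<beta> (fn s')) = measure_pmf.expectation (KT (fn s)) (state_cost \<beta>)"
    unfolding lumpK by simp
  finally have X: "measure_pmf.expectation (KO s) (state_cost \<beta>) = measure_pmf.expectation (KT (fn s)) (state_cost \<beta>) + \<beta> * measure_pmf.expectation (KO s) hU + (1-\<beta>) * measure_pmf.expectation (KO s) hV" .
  have kt: "trunc_kernel N p q ps (pol (fn s)) (fn s) = KT (fn s)" by (simp add: KT_def)
  have ko: "orig_kernel p q ps (pol s) s = KO s" by (simp add: KO_def)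
  show ?thesis unfolding stage_cost_def kt ko X by (simp add: pol_fN)
qed

lemma stage_rel:
  "measure_pmf.expectation (DO t) (\<lambda>s. stage_cost (orig_kernel p q ps) \<beta> lam s (pol s))
   = measure_pmf.expectation (DT t) (\<lambda>s. stage_cost (trunc_kernel N p q ps) \<beta> lam s (pol s))
   + \<beta> * measure_pmf.expectation (DO (Suc t)) hU + (1-\<beta>) * measure_pmf.expectation (DO (Suc t)) hV"
proof -
  define sT where "sT s = stage_cost (trunc_kernel N p q ps) \<beta> lam s (pol s)" for s
  have e0: "measure_pmf.expectation (DO t) (\<lambda>s. stage_cost (orig_kernel p q ps) \<beta> lam s (pol s))
    = (\<Sum>a\<in>set_pmf (DO t). (sT (fn a) + \<beta> * measure_pmf.expectation (KO a) hU + (1-\<beta>) * measure_pmf.expectation (KO a) hV) * pmf (DO t) a)"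
    unfolding expDO[of t] stage_pt sT_def ..
  have e1: "measure_pmf.expectation (DT t) sT = (\<Sum>a\<in>set_pmf (DO t). sT (fn a) * pmf (DO t) a)"
    unfolding DT_DO integral_map_pmf expDO[of t] ..
  have e2: "measure_pmf.expectation (DO (Suc t)) hU = (\<Sum>a\<in>set_pmf (DO t). measure_pmf.expectation (KO a) hU * pmf (DO t) a)"
    unfolding exp_bindO expDO[of t] ..
  have e3: "measure_pmf.expectation (DO (Suc t)) hV = (\<Sum>a\<in>set_pmf (DO t). measure_pmf.expectation (KO a) hV * pmf (DO t) a)"
    unfolding exp_bindO expDO[of t] ..
  show ?thesis unfolding e0 e2 e3 sT_def[symmetric] e1
    by (simp only: distrib_right sum.distrib sum_distrib_left mult.assoc)
qed


lemma orig_V1: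
  assumes st: "set_pmf \<nu> \<subseteq> orig_states" "bind_pmf \<nu> KO = \<nu>"
  shows "pmf \<nu> (0,1,1) = q * pmf \<nu> (1,1,0)"
proof -
  have "pmf \<nu> (0,1,1) = pmf (KO (1,1,0)) (0,1,1) * pmf \<nu> (1,1,0)"
  proof (rule orig_bal[OF st])
    fix a assume "a \<in> orig_states" "pmf (KO a) (0,1,1) \<noteq> 0"
    then show "a = (1,1,0)" unfolding orig_states_def
      by (auto simp: pKO_A[simplified] pKO_U[simplified] pKO_V[simplified])
  qed
  then show ?thesis by (simp add: pKO_B[simplified])
qed

lemma orig_Vs:
  assumes st: "set_pmf \<nu> \<subseteq> orig_states" "bind_pmf \<nu> KO = \<nu>" and e: "1 \<le> e"
  shows "pmf \<nu> (0,1,Suc e) = (1-p) * tau' e * pmf \<nu> (0,1,e)"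
proof -
  have "pmf \<nu> (0,1,Suc e) = pmf (KO (0,1,e)) (0,1,Suc e) * pmf \<nu> (0,1,e)"
  proof (rule orig_bal[OF st])
    fix a assume "a \<in> orig_states" "pmf (KO a) (0,1,Suc e) \<noteq> 0"
    then show "a = (0,1,e)" using e unfolding orig_states_def
      by (auto simp: pKO_A[simplified] pKO_B[simplified] pKO_U[simplified] pKO_V[simplified] split: if_splits)
  qed
  then show ?thesis by (simp add: pKO_V[simplified])
qed

lemma orig_closedV:
  assumes st: "set_pmf \<nu> \<subseteq> orig_states" "bind_pmf \<nu> KO = \<nu>"
  shows "1 \<le> d \<Longrightarrow> pmf \<nu> (0,1,d) = q * pmf \<nu> (1,1,0) * (1-p)^(d-1) * (1-ps)^(d-dund)"
proof (induction d rule: nat_induct_at_least)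
  case base then show ?case using orig_V1[OF st] du by simp
next
  case (Suc e)
  show ?case
  proof (cases "dund \<le> e")
    case True
    then have "Suc e - dund = Suc (e - dund)" by (simp add: Suc_diff_le)
    then show ?thesis using orig_Vs[OF st Suc(1)] Suc True by (cases e) (auto simp: tau'_def)
  next
    case False
    then have "Suc e - dund = 0" "e - dund = 0" by auto
    then show ?thesis using orig_Vs[OF st Suc(1)] Suc False by (cases e) (auto simp: tau'_def)
  qed
qed

lemma sig_alg:
  fixes a b u :: real
  assumes "2 \<le> N" "db < N" "0 \<le> b" "b < 1" "0 \<le> u" "u < 1"
  shows "\<beta> * ((b*u) / (1 - b*u) * ((b*u) / (1 - b*u) * (a * b^(N-1-1) * u^(N-1-db))))
     = \<beta> * a * b^N * u^(N - db + 1) / (1 - b*u)^2"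
proof -
  obtain k where k: "N = k + 2" using assms(1) by (metis add.commute le_Suc_ex)
  have e1: "N - 1 - 1 = k" using k by simp
  obtain m where m: "N - db + 1 = m + 2" "N - 1 - db = m" using assms(2) by (intro that[of "N - 1 - db"]) auto
  have "b*u \<le> b" using mult_left_le[of u b] assms by simp
  then have "b*u < 1" using assms by simp
  then have "1 - b*u \<noteq> 0" by simp
  then show ?thesis unfolding m e1 unfolding k by (simp add: power_add field_simps power2_eq_square)
qed

lemma pmf_map_fn: assumes "s = (x,xh,d)" "d < N" shows "pmf (map_pmf fn \<nu>) s = pmf \<nu> s"
proof -
  have "fn -` {s} = {s}" using assms by (auto simp: fN_def min_def split: if_splits)
  then show ?thesis by (simp add: pmf_map measure_pmf_single)
qed

lemma main:
  fixes \<beta> lam :: real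
  assumes so: "stationary_dist (orig_kernel p q ps) (switching_policy dbar dund) orig_states \<nu>"
    and sN: "stationary_dist (trunc_kernel N p q ps) (switching_policy dbar dund) (trunc_states N) \<nu>N"
  shows "(\<forall>s \<in> trunc_states N - {(1,0,N), (0,1,N)}. pmf \<nu>N s = pmf \<nu> s)
    \<and> pmf \<nu>N (1,0,N) = ((1-q)*(1-ps)) / (1 - (1-q)*(1-ps)) * pmf \<nu> (1,0,N-1)
    \<and> pmf \<nu>N (0,1,N) = ((1-p)*(1-ps)) / (1 - (1-p)*(1-ps)) * pmf \<nu> (0,1,N-1)
    \<and> avg_cost (trunc_kernel N p q ps) \<beta> lam (switching_policy dbar dund)
      = avg_cost (orig_kernel p q ps) \<beta> lam (switching_policy dbar dund)
        - ereal (\<beta> * pmf \<nu> (0,0,0) * p * (1-q)^N * (1-ps)^(N - dbar + 1)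
                   / (1 - (1-q)*(1-ps))^2
                 + (1-\<beta>) * pmf \<nu> (1,1,0) * q * (1-p)^N * (1-ps)^(N - dund + 1)
                   / (1 - (1-p)*(1-ps))^2)"
proof -
  have oS: "set_pmf \<nu> \<subseteq> orig_states" and oB: "bind_pmf \<nu> KO = \<nu>"
    using so unfolding stationary_dist_def KO_eta by auto
  have tS: "set_pmf \<nu>N \<subseteq> trunc_states N" and tB: "bind_pmf \<nu>N KT = \<nu>N"
    using sN unfolding stationary_dist_def KT_eta by auto
  have eqN: "\<nu>N = map_pmf fn \<nu>" by (rule uniq[OF tS tB map_stat[OF oS oB]])
  have C1: "\<forall>s \<in> trunc_states N - {(1,0,N), (0,1,N)}. pmf \<nu>N s = pmf \<nu> s"
  proof
    fix s assume s: "s \<in> trunc_states N - {(1,0,N), (0,1,N)}"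
    have "\<exists>x xh d. s = (x,xh,d) \<and> d < N" using s N2 unfolding trunc_states_def by (auto simp: le_less)
    then obtain x xh d where "s = (x,xh,d)" "d < N" by blast
    then show "pmf \<nu>N s = pmf \<nu> s" unfolding eqN by (rule pmf_map_fn)
  qed
  have U1: "pmf \<nu>N (1,0,N-1) = pmf \<nu> (1,0,N-1)" using C1 N2 unfolding trunc_states_def by auto
  have V1: "pmf \<nu>N (0,1,N-1) = pmf \<nu> (0,1,N-1)" using C1 N2 unfolding trunc_states_def by auto
  have C2: "pmf \<nu>N (1,0,N) = r / (1 - r) * pmf \<nu> (1,0,N-1)"
  proof -
    have "pmf \<nu>N (1,0,N) = r * (pmf \<nu>N (1,0,N-1) + pmf \<nu>N (1,0,N))" using T3[OF tS] tB by simp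
    then have "(1 - r) * pmf \<nu>N (1,0,N) = r * pmf \<nu> (1,0,N-1)" using U1 by (simp add: algebra_simps)
    then show ?thesis using r_bounds by (simp add: field_simps)
  qed
  have C3: "pmf \<nu>N (0,1,N) = r' / (1 - r') * pmf \<nu> (0,1,N-1)"
  proof -
    have "pmf \<nu>N (0,1,N) = r' * (pmf \<nu>N (0,1,N-1) + pmf \<nu>N (0,1,N))" using T3'[OF tS] tB by simp
    then have "(1 - r') * pmf \<nu>N (0,1,N) = r' * pmf \<nu> (0,1,N-1)" using V1 by (simp add: algebra_simps)
    then show ?thesis using r_bounds by (simp add: field_simps)
  qed
  define y where "y t = measure_pmf.expectation (DO t) hU" for t
  define z where "z t = measure_pmf.expectation (DO t) hV" for t
  define B where "B T = \<beta> * ((\<Sum>t<T. y (Suc t)) / real T) + (1-\<beta>) * ((\<Sum>t<T. z (Suc t)) / real T)" for T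
  define sig where "sig = \<beta> * (r / (1-r) * pmf \<nu>N (1,0,N)) + (1-\<beta>) * (r' / (1-r') * pmf \<nu>N (0,1,N))"
  have DO0: "DO 0 = return_pmf (0,0,0)" by (simp add: DO_def)
  have Ly: "(\<lambda>T. (\<Sum>t<T. y (Suc t)) / real T) \<longlonglongrightarrow> r / (1-r) * pmf \<nu>N (1,0,N)"
    by (rule Ylim[where v="\<lambda>t. pmf (DT t) (1,0,N)"])
       (use N2 in \<open>auto simp: y_def DO0 hU_def y_rec pmf_le_1 r_bounds intro!: ces_conv[OF tS tB] simp: trunc_states_def\<close>)
  have Lz: "(\<lambda>T. (\<Sum>t<T. z (Suc t)) / real T) \<longlonglongrightarrow> r' / (1-r') * pmf \<nu>N (0,1,N)"
    by (rule Ylim[where v="\<lambda>t. pmf (DT t) (0,1,N)"])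
       (use N2 in \<open>auto simp: z_def DO0 hV_def z_rec pmf_le_1 r_bounds intro!: ces_conv[OF tS tB] simp: trunc_states_def\<close>)
  have LB: "B \<longlonglongrightarrow> sig" unfolding B_def sig_def
    by (intro tendsto_add tendsto_mult tendsto_const Ly Lz)
  define aT where "aT T = (1 / real T) * (\<Sum>t<T. measure_pmf.expectation (DT t) (\<lambda>s. stage_cost (trunc_kernel N p q ps) \<beta> lam s (pol s)))" for T
  have aO: "(1 / real T) * (\<Sum>t<T. measure_pmf.expectation (DO t) (\<lambda>s. stage_cost (orig_kernel p q ps) \<beta> lam s (pol s))) = B T + aT T" for T
  proof -
    have "(\<Sum>t<T. measure_pmf.expectation (DO t) (\<lambda>s. stage_cost (orig_kernel p q ps) \<beta> lam s (pol s)))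
      = (\<Sum>t<T. measure_pmf.expectation (DT t) (\<lambda>s. stage_cost (trunc_kernel N p q ps) \<beta> lam s (pol s)))
        + \<beta> * (\<Sum>t<T. y (Suc t)) + (1-\<beta>) * (\<Sum>t<T. z (Suc t))"
      unfolding stage_rel y_def z_def by (simp only: sum.distrib sum_distrib_left)
    then show ?thesis unfolding aT_def B_def by (simp only:) (simp add: divide_inverse algebra_simps)
  qed
  have avgT: "avg_cost (trunc_kernel N p q ps) \<beta> lam pol = limsup (\<lambda>T. ereal (aT T))"
    unfolding avg_cost_def aT_def DT_def ..
  have avgO: "avg_cost (orig_kernel p q ps) \<beta> lam pol = limsup (\<lambda>T. ereal (B T) + ereal (aT T))"
    unfolding avg_cost_def DO_def[symmetric] aO by simp
  also have "\<dots> = ereal sig + limsup (\<lambda>T. ereal (aT T))"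
    by (rule ereal_limsup_lim_add) (use LB in auto)
  finally have avg: "avg_cost (trunc_kernel N p q ps) \<beta> lam pol = avg_cost (orig_kernel p q ps) \<beta> lam pol - ereal sig"
    unfolding avgT by (cases "limsup (\<lambda>T. ereal (aT T))") auto
  have sigv: "sig = \<beta> * pmf \<nu> (0,0,0) * p * (1-q)^N * (1-ps)^(N - dbar + 1) / (1 - (1-q)*(1-ps))^2
                 + (1-\<beta>) * pmf \<nu> (1,1,0) * q * (1-p)^N * (1-ps)^(N - dund + 1) / (1 - (1-p)*(1-ps))^2"
  proof -
    have u: "pmf \<nu> (1,0,N-1) = (p * pmf \<nu> (0,0,0)) * (1-q)^(N-1-1) * (1-ps)^(N-1-dbar)"
      using orig_closed[OF oS oB, of "N-1"] N2 by simp
    have v: "pmf \<nu> (0,1,N-1) = (q * pmf \<nu> (1,1,0)) * (1-p)^(N-1-1) * (1-ps)^(N-1-dund)"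
      using orig_closedV[OF oS oB, of "N-1"] N2 by simp
    have "\<beta> * (r / (1-r) * pmf \<nu>N (1,0,N)) = \<beta> * (p * pmf \<nu> (0,0,0)) * (1-q)^N * (1-ps)^(N - dbar + 1) / (1 - (1-q)*(1-ps))^2"
      unfolding C2 u r_def by (rule sig_alg) (use N2 q0 q1 ps0 ps1 in auto)
    moreover have "(1-\<beta>) * (r' / (1-r') * pmf \<nu>N (0,1,N)) = (1-\<beta>) * (q * pmf \<nu> (1,1,0)) * (1-p)^N * (1-ps)^(N - dund + 1) / (1 - (1-p)*(1-ps))^2"
      unfolding C3 v r'_def by (rule sig_alg) (use N2 p0 p1 ps0 ps1 in auto)
    ultimately show ?thesis unfolding sig_def by (simp add: mult.assoc mult.left_commute)
  qed
  show ?thesis using C1 C2 C3 avg sigv unfolding r_def r'_def by simp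
qed

end

theorem proposition5:
  fixes p q ps \<beta> lam :: real and dbar dund N :: nat and \<nu> \<nu>N :: "state pmf"
  assumes "0 < p" "p < 1" "0 < q" "q < 1" "0 < ps" "ps \<le> 1"
    and "0 \<le> \<beta>" "\<beta> \<le> 1" "0 \<le> lam"
    and "1 \<le> dbar" "1 \<le> dund" "N > max dbar dund"
    and "stationary_dist (orig_kernel p q ps) (switching_policy dbar dund) orig_states \<nu>"
    and "stationary_dist (trunc_kernel N p q ps) (switching_policy dbar dund) (trunc_states N) \<nu>N"
  shows "(\<forall>s \<in> trunc_states N - {(1,0,N), (0,1,N)}. pmf \<nu>N s = pmf \<nu> s)
    \<and> pmf \<nu>N (1,0,N) = ((1-q)*(1-ps)) / (1 - (1-q)*(1-ps)) * pmf \<nu> (1,0,N-1)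
    \<and> pmf \<nu>N (0,1,N) = ((1-p)*(1-ps)) / (1 - (1-p)*(1-ps)) * pmf \<nu> (0,1,N-1)
    \<and> avg_cost (trunc_kernel N p q ps) \<beta> lam (switching_policy dbar dund)
      = avg_cost (orig_kernel p q ps) \<beta> lam (switching_policy dbar dund)
        - ereal (\<beta> * pmf \<nu> (0,0,0) * p * (1-q)^N * (1-ps)^(N - dbar + 1)
                   / (1 - (1-q)*(1-ps))^2
                 + (1-\<beta>) * pmf \<nu> (1,1,0) * q * (1-p)^N * (1-ps)^(N - dund + 1)
                   / (1 - (1-p)*(1-ps))^2)"
proof -
  interpret sys p q ps dbar dund N
    by unfold_locales (use assms in auto)
  show ?thesis by (rule main[OF assms(13) assms(14)])
qed

end
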